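(* Let $\mathbf{A}^*\in\mathfrak{A}$ and let $\mathbb{P}_{\mathbf{A}^*}$ be a probability measure. For $t$ in a countable unbounded set $\mathcal{T}\subset(0,\infty)$ let $\mathbf{H}_{1,t},\mathbf{H}_{2,t}$ be $\mathbb{R}^{pd^2}$-valued and $[\mathbf{H}]_{1,t},[\mathbf{H}]_{2,t}$ be $\mathcal{M}_{pd^2}(\mathbb{R})$-valued random variables, and set $\hat{\mathbf{A}}_{k,t}=\mathrm{vec}^{-1}([\mathbf{H}]_{k,t}^{-1}\mathbf{H}_{k,t})$, $k=1,2$. Suppose $\hat{\mathbf{A}}_{1,t}\to\mathbf{A}^*$ in $\mathbb{P}_{\mathbf{A}^*}$-probability, and $\sqrt{t}(\mathrm{vec}(\hat{\mathbf{A}}_{1,t})-\mathrm{vec}(\mathbf{A}^* ))\xrightarrow{\mathcal{L}}N(\mathbf{0},\mathcal{H}_\infty^{-1})$ as $t\to\infty$, where $\mathcal{H}_\infty\in\mathcal{M}_{pd^2}(\mathbb{R})$ is symmetric positive definite with $t^{-1}[\mathbf{H}]_{1,t}\to\mathcal{H}_\infty$ in $\mathbb{P}_{\mathbf{A}^*}$-probability. Suppose further that, as $t\to\infty$, $$t^{-1/2}(\mathbf{H}_{2,t}-\mathbf{H}_{1,t})\to0\quad\text{and}\quad t^{-1/2}([\mathbf{H}]_{2,t}-[\mathbf{H}]_{1,t})\to0$$ in $\mathbb{P}_{\mathbf{A}^*}$-probability. Then $\hat{\mathbf{A}}_{2,t}\to\mathbf{A}^*$ in $\mathbb{P}_{\mathbf{A}^*}$-probability,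 $\sqrt{t}(\mathrm{vec}(\hat{\mathbf{A}}_{2,t})-\mathrm{vec}(\mathbf{A}^* ))\xrightarrow{\mathcal{L}}N(\mathbf{0},\mathcal{H}_\infty^{-1})$, and $t^{-1}[\mathbf{H}]_{2,t}\to\mathcal{H}_\infty$ in $\mathbb{P}_{\mathbf{A}^*}$-probability.
   Context: $\mathfrak{A}=\{\mathbf{A}=(A_1,\dots,A_p)\in(\mathcal{M}_d(\mathbb{R}))^p:\ \text{all eigenvalues of }\mathcal{A}_{\mathbf{A}}\text{ have strictly negative real part}\}$, where $\mathcal{A}_{\mathbf{A}}\in\mathcal{M}_{pd}(\mathbb{R})$ is the block companion matrix with $I_d$ on the block superdiagonal and last block row $(-A_p,\dots,-A_1)$. $\mathrm{vec}:(\mathcal{M}_d(\mathbb{R}))^p\to\mathbb{R}^{pd^2}$ concatenates the column-stacked $A_1,\dots,A_p$, and $\mathrm{vec}^{-1}$ is its inverse. All limits are along $t\in\mathcal{T}$. *)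

theory Defs
  imports "HOL-Probability.Probability" "Jordan_Normal_Form.Matrix"
    "Jordan_Normal_Form.Char_Poly" "Jordan_Normal_Form.Gauss_Jordan_Elimination"
begin

text \<open>Finite-dimensional objects are JNF vectors/matrices with explicit dimensions.
  Tuples (A_1,...,A_p) are functions nat => real mat, used at indices 1..p.\<close>

definition minv :: "real mat \<Rightarrow> real mat" where
  "minv A = (case mat_inverse A of Some B \<Rightarrow> B | None \<Rightarrow> 0\<^sub>m (dim_row A) (dim_col A))"

text \<open>block companion matrix: I_d on block superdiagonal, last block row (-A_p,...,-A_1)\<close>
definition companion :: "nat \<Rightarrow> nat \<Rightarrow> (nat \<Rightarrow> real mat) \<Rightarrow> real mat" where
  "companion p d A = mat (p*d) (p*d) (\<lambda>(a,b).
     let r = a div d; i = a mod d; c = b div d; j = b mod d in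
     if r + 1 < p then (if c = r + 1 \<and> i = j then 1 else 0)
     else - ((A (p - c)) $$ (i,j)))"

definition tuple_dims :: "nat \<Rightarrow> nat \<Rightarrow> (nat \<Rightarrow> real mat) \<Rightarrow> bool" where
  "tuple_dims p d A = (\<forall>k\<in>{1..p}. A k \<in> carrier_mat d d)"

definition stable_set :: "nat \<Rightarrow> nat \<Rightarrow> (nat \<Rightarrow> real mat) set" where
  "stable_set p d = {A. tuple_dims p d A \<and>
     (\<forall>z::complex. eigenvalue (map_mat complex_of_real (companion p d A)) z \<longrightarrow> Re z < 0)}"

text \<open>vec: concatenation of the column-stacked A_1,...,A_p\<close>
definition vecA :: "nat \<Rightarrow> nat \<Rightarrow> (nat \<Rightarrow> real mat) \<Rightarrow> real vec" where
  "vecA p d A = Matrix.vec (p*d*d) (\<lambda>n. let k = n div (d*d) + 1; r = n mod (d*d)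
      in (A k) $$ (r mod d, r div d))"

definition vec_inv :: "nat \<Rightarrow> nat \<Rightarrow> real vec \<Rightarrow> (nat \<Rightarrow> real mat)" where
  "vec_inv p d v = (\<lambda>k. if 1 \<le> k \<and> k \<le> p
      then mat d d (\<lambda>(i,j). v $ ((k - 1)*d*d + j*d + i)) else 0\<^sub>m d d)"

definition estimator :: "nat \<Rightarrow> nat \<Rightarrow> real mat \<Rightarrow> real vec \<Rightarrow> (nat \<Rightarrow> real mat)" where
  "estimator p d HH h = vec_inv p d (minv HH *\<^sub>v h)"

definition vnorm :: "real vec \<Rightarrow> real" where
  "vnorm v = sqrt (\<Sum>i<dim_vec v. (v $ i)^2)"

definition mnorm :: "real mat \<Rightarrow> real" where
  "mnorm A = sqrt (\<Sum>i<dim_row A. \<Sum>j<dim_col A. (A $$ (i,j))^2)"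

definition tnorm_dist :: "nat \<Rightarrow> (nat \<Rightarrow> real mat) \<Rightarrow> (nat \<Rightarrow> real mat) \<Rightarrow> real" where
  "tnorm_dist p A B = sqrt (\<Sum>k\<in>{1..p}. (mnorm (A k - B k))^2)"

definition rv_vec :: "'a measure \<Rightarrow> nat \<Rightarrow> ('a \<Rightarrow> real vec) \<Rightarrow> bool" where
  "rv_vec M n X = ((\<forall>\<omega>\<in>space M. dim_vec (X \<omega>) = n) \<and>
      (\<forall>i<n. (\<lambda>\<omega>. X \<omega> $ i) \<in> borel_measurable M))"

definition rv_mat :: "'a measure \<Rightarrow> nat \<Rightarrow> ('a \<Rightarrow> real mat) \<Rightarrow> bool" where
  "rv_mat M n X = ((\<forall>\<omega>\<in>space M. X \<omega> \<in> carrier_mat n n) \<and>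
      (\<forall>i<n. \<forall>j<n. (\<lambda>\<omega>. X \<omega> $$ (i,j)) \<in> borel_measurable M))"

definition conv_prob_vec :: "'a measure \<Rightarrow> real filter \<Rightarrow> (real \<Rightarrow> 'a \<Rightarrow> real vec) \<Rightarrow> real vec \<Rightarrow> bool" where
  "conv_prob_vec M F X c = (\<forall>\<epsilon>>0.
      ((\<lambda>t. measure M {\<omega>\<in>space M. vnorm (X t \<omega> - c) > \<epsilon>}) \<longlongrightarrow> 0) F)"

definition conv_prob_mat :: "'a measure \<Rightarrow> real filter \<Rightarrow> (real \<Rightarrow> 'a \<Rightarrow> real mat) \<Rightarrow> real mat \<Rightarrow> bool" where
  "conv_prob_mat M F X c = (\<forall>\<epsilon>>0.
      ((\<lambda>t. measure M {\<omega>\<in>space M. mnorm (X t \<omega> - c) > \<epsilon>}) \<longlongrightarrow> 0) F)"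

definition conv_prob_tuple :: "nat \<Rightarrow> 'a measure \<Rightarrow> real filter \<Rightarrow> (real \<Rightarrow> 'a \<Rightarrow> nat \<Rightarrow> real mat)
    \<Rightarrow> (nat \<Rightarrow> real mat) \<Rightarrow> bool" where
  "conv_prob_tuple p M F X c = (\<forall>\<epsilon>>0.
      ((\<lambda>t. measure M {\<omega>\<in>space M. tnorm_dist p (X t \<omega>) c > \<epsilon>}) \<longlongrightarrow> 0) F)"

definition mvn_density :: "nat \<Rightarrow> real mat \<Rightarrow> real vec \<Rightarrow> real" where
  "mvn_density n \<Sigma> x = exp (- (x \<bullet> (minv \<Sigma> *\<^sub>v x)) / 2) / sqrt ((2*pi)^n * det \<Sigma>)"

definition mvn :: "nat \<Rightarrow> real mat \<Rightarrow> (nat \<Rightarrow> real) measure" where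
  "mvn n \<Sigma> = density (PiM {..<n} (\<lambda>_. lborel)) (\<lambda>x. ennreal (mvn_density n \<Sigma> (Matrix.vec n x)))"

definition bounded_cont_vec :: "nat \<Rightarrow> (real vec \<Rightarrow> real) \<Rightarrow> bool" where
  "bounded_cont_vec n f =
     ((\<exists>B. \<forall>v. dim_vec v = n \<longrightarrow> \<bar>f v\<bar> \<le> B) \<and>
      (\<forall>v. dim_vec v = n \<longrightarrow> (\<forall>\<epsilon>>0. \<exists>\<delta>>0. \<forall>w. dim_vec w = n \<longrightarrow>
          vnorm (w - v) < \<delta> \<longrightarrow> \<bar>f w - f v\<bar> < \<epsilon>)))"

definition conv_law_normal :: "'a measure \<Rightarrow> real filter \<Rightarrow> nat \<Rightarrow> (real \<Rightarrow> 'a \<Rightarrow> real vec) \<Rightarrow> real mat \<Rightarrow> bool" where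
  "conv_law_normal M F n X \<Sigma> = (\<forall>f. bounded_cont_vec n f \<longrightarrow>
      ((\<lambda>t. \<integral>\<omega>. f (X t \<omega>) \<partial>M) \<longlongrightarrow> (\<integral>x. f (Matrix.vec n x) \<partial>mvn n \<Sigma>)) F)"

definition sym_pos_def :: "nat \<Rightarrow> real mat \<Rightarrow> bool" where
  "sym_pos_def n H = (H \<in> carrier_mat n n \<and> transpose_mat H = H \<and>
      (\<forall>v. dim_vec v = n \<longrightarrow> v \<noteq> 0\<^sub>v n \<longrightarrow> v \<bullet> (H *\<^sub>v v) > 0))"

end

theory Submission
  imports Defs
begin


lemma minv_cases:
  assumes A: "A \<in> carrier_mat n n"
  shows "det A \<noteq> 0 \<Longrightarrow> minv A \<in> carrier_mat n n \<and> A * minv A = 1\<^sub>m n \<and> minv A * A = 1\<^sub>m n"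
    and "det A = 0 \<Longrightarrow> minv A = 0\<^sub>m n n"
proof -
  assume d: "det A \<noteq> 0"
  have "A \<in> Units (ring_mat TYPE(real) n ())" by (rule det_non_zero_imp_unit[OF A d])
  then obtain B where "mat_inverse A = Some B"
  proof (cases "mat_inverse A")
    case None
    then have "A \<notin> Units (ring_mat TYPE(real) n ())" by (rule mat_inverse(1)[OF A])
    with \<open>A \<in> Units (ring_mat TYPE(real) n ())\<close> show ?thesis by blast
  qed auto
  then show "minv A \<in> carrier_mat n n \<and> A * minv A = 1\<^sub>m n \<and> minv A * A = 1\<^sub>m n"
    using mat_inverse(2)[OF A] unfolding minv_def by auto
next
  assume d: "det A = 0"
  show "minv A = 0\<^sub>m n n"
  proof (cases "mat_inverse A")
    case None then show ?thesis using A unfolding minv_def by auto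
  next
    case (Some B)
    then have B: "A * B = 1\<^sub>m n" "B \<in> carrier_mat n n" using mat_inverse(2)[OF A] by auto
    have "det (A * B) = det A * det B" by (rule det_mult[OF A B(2)])
    then have False using B d by (simp add: det_one)
    then show ?thesis ..
  qed
qed

lemma minv_carrier: "A \<in> carrier_mat n n \<Longrightarrow> minv A \<in> carrier_mat n n"
  using minv_cases by (cases "det A = 0") auto

lemma minv_adj:
  assumes A: "A \<in> carrier_mat n n" and d: "det A \<noteq> 0"
  shows "minv A = (1 / det A) \<cdot>\<^sub>m adj_mat A"
proof -
  let ?B = "minv A"
  have B: "?B \<in> carrier_mat n n" "A * ?B = 1\<^sub>m n" using minv_cases(1)[OF A d] by auto
  have adj: "adj_mat A \<in> carrier_mat n n" "adj_mat A * A = det A \<cdot>\<^sub>m 1\<^sub>m n" using adj_mat[OF A] by auto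
  have "adj_mat A = adj_mat A * (A * ?B)" using B adj by simp
  also have "\<dots> = (adj_mat A * A) * ?B" using assoc_mult_mat[OF adj(1) A B(1)] by simp
  also have "\<dots> = det A \<cdot>\<^sub>m ?B" using adj B mult_smult_assoc_mat[OF one_carrier_mat B(1)] by simp
  finally have "(1 / det A) \<cdot>\<^sub>m adj_mat A = (1/det A) \<cdot>\<^sub>m (det A \<cdot>\<^sub>m ?B)" by simp
  also have "\<dots> = ?B" using d B(1) by (intro eq_matI) auto
  finally show ?thesis by simp
qed

lemma vnorm_L2: "vnorm v = L2_set (\<lambda>i. v $ i) {..<dim_vec v}"
  unfolding vnorm_def L2_set_def by simp

lemma vnorm_nonneg: "vnorm v \<ge> 0"
  unfolding vnorm_def by (simp add: sum_nonneg)

lemma mnorm_L2: "mnorm A = L2_set (\<lambda>(i,j). A $$ (i,j)) ({..<dim_row A} \<times> {..<dim_col A})"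
  unfolding mnorm_def L2_set_def by (simp add: sum.cartesian_product case_prod_beta)

lemma mnorm_nonneg: "mnorm A \<ge> 0"
  unfolding mnorm_def by (simp add: sum_nonneg)

lemma vnorm_add: assumes "dim_vec u = dim_vec v" shows "vnorm (u + v) \<le> vnorm u + vnorm v"
proof -
  have "vnorm (u + v) = L2_set (\<lambda>i. u $ i + v $ i) {..<dim_vec v}"
    unfolding vnorm_L2 using assms by (intro L2_set_cong) auto
  also have "\<dots> \<le> vnorm u + vnorm v" unfolding vnorm_L2 using assms by (simp add: L2_set_triangle_ineq)
  finally show ?thesis .
qed

lemma vnorm_minus: assumes "dim_vec u = dim_vec v" shows "vnorm (u - v) \<le> vnorm u + vnorm v"
proof -
  have "vnorm (u - v) = L2_set (\<lambda>i. u $ i + (- v $ i)) {..<dim_vec v}"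
    unfolding vnorm_L2 using assms by (intro L2_set_cong) auto
  also have "\<dots> \<le> L2_set (\<lambda>i. u $ i) {..<dim_vec v} + L2_set (\<lambda>i. - v $ i) {..<dim_vec v}"
    by (rule L2_set_triangle_ineq)
  also have "L2_set (\<lambda>i. - v $ i) {..<dim_vec v} = vnorm v" unfolding vnorm_L2 L2_set_def by simp
  finally show ?thesis unfolding vnorm_L2 using assms by simp
qed

lemma vnorm_smult: "vnorm (c \<cdot>\<^sub>v v) = \<bar>c\<bar> * vnorm v"
proof -
  have "vnorm (c \<cdot>\<^sub>v v) = L2_set (\<lambda>i. \<bar>c\<bar> * v $ i) {..<dim_vec v}"
    unfolding vnorm_L2 L2_set_def by (intro arg_cong[where f=sqrt] sum.cong) (auto simp: power_mult_distrib)
  also have "\<dots> = \<bar>c\<bar> * vnorm v" unfolding vnorm_L2 by (simp add: L2_set_right_distrib)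
  finally show ?thesis .
qed

lemma mnorm_add: assumes "dim_row A = dim_row B" "dim_col A = dim_col B"
  shows "mnorm (A + B) \<le> mnorm A + mnorm B"
proof -
  have "mnorm (A + B) = L2_set (\<lambda>x. (\<lambda>(i,j). A $$ (i,j)) x + (\<lambda>(i,j). B $$ (i,j)) x) ({..<dim_row B} \<times> {..<dim_col B})"
    unfolding mnorm_L2 using assms by (intro L2_set_cong) auto
  also have "\<dots> \<le> mnorm A + mnorm B" unfolding mnorm_L2 using assms by (simp add: L2_set_triangle_ineq)
  finally show ?thesis .
qed

lemma mnorm_smult: "mnorm (c \<cdot>\<^sub>m A) = \<bar>c\<bar> * mnorm A"
proof -
  have "mnorm (c \<cdot>\<^sub>m A) = L2_set (\<lambda>x. \<bar>c\<bar> * (\<lambda>(i,j). A $$ (i,j)) x) ({..<dim_row A} \<times> {..<dim_col A})"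
    unfolding mnorm_L2 L2_set_def by (intro arg_cong[where f=sqrt] sum.cong) (auto simp: power_mult_distrib)
  also have "\<dots> = \<bar>c\<bar> * mnorm A" unfolding mnorm_L2 by (simp add: L2_set_right_distrib)
  finally show ?thesis .
qed

lemma mnorm_minus_sym: assumes "dim_row A = dim_row B" "dim_col A = dim_col B"
  shows "mnorm (A - B) = mnorm (B - A)"
  unfolding mnorm_def using assms by (intro arg_cong[where f=sqrt] sum.cong) (auto simp: power2_commute)

lemma vnorm_mult_mat_vec:
  assumes A: "A \<in> carrier_mat n m" and v: "dim_vec v = m"
  shows "vnorm (A *\<^sub>v v) \<le> mnorm A * vnorm v"
proof -
  have row: "(A *\<^sub>v v) $ i ^ 2 \<le> (\<Sum>j<m. (A $$ (i,j))^2) * (vnorm v)^2" if i: "i < n" for i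
  proof -
    have "(A *\<^sub>v v) $ i = (\<Sum>j<m. A $$ (i,j) * v $ j)"
      using A v i by (auto simp: scalar_prod_def atLeast0LessThan intro!: sum.cong)
    then have "\<bar>(A *\<^sub>v v) $ i\<bar> \<le> (\<Sum>j<m. \<bar>A $$ (i,j)\<bar> * \<bar>v $ j\<bar>)"
      by (simp add: sum_abs[THEN order_trans] abs_mult)
    also have "\<dots> \<le> L2_set (\<lambda>j. A $$ (i,j)) {..<m} * L2_set (\<lambda>j. v $ j) {..<m}"
      by (rule L2_set_mult_ineq)
    finally have "\<bar>(A *\<^sub>v v) $ i\<bar> \<le> L2_set (\<lambda>j. A $$ (i,j)) {..<m} * vnorm v"
      using v by (simp add: vnorm_L2)
    then have "\<bar>(A *\<^sub>v v) $ i\<bar>^2 \<le> (L2_set (\<lambda>j. A $$ (i,j)) {..<m} * vnorm v)^2"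
      by (rule power_mono) simp
    then show ?thesis by (simp add: power_mult_distrib L2_set_def sum_nonneg)
  qed
  have "(vnorm (A *\<^sub>v v))^2 = (\<Sum>i<n. (A *\<^sub>v v) $ i ^ 2)"
    unfolding vnorm_def using A by (simp add: sum_nonneg)
  also have "\<dots> \<le> (\<Sum>i<n. (\<Sum>j<m. (A $$ (i,j))^2) * (vnorm v)^2)"
    by (rule sum_mono) (use row in auto)
  also have "\<dots> = (mnorm A * vnorm v)^2"
    unfolding mnorm_def using A by (simp add: power_mult_distrib sum_nonneg sum_distrib_right)
  finally show ?thesis
    by (rule power2_le_imp_le) (simp add: mnorm_nonneg vnorm_nonneg)
qed




section \<open>Measurability\<close>

lemma meas_eqI:
  assumes "g \<in> borel_measurable M" "\<And>w. w \<in> space M \<Longrightarrow> f w = g w"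
  shows "f \<in> borel_measurable M"
  using assms measurable_cong[of M f g borel] by blast

lemma rv_vec_minus:
  assumes "rv_vec M n X" "rv_vec M n Y"
  shows "rv_vec M n (\<lambda>\<omega>. X \<omega> - Y \<omega>)"
  unfolding rv_vec_def
proof safe
  fix i assume i: "i < n"
  have "(\<lambda>\<omega>. X \<omega> $ i - Y \<omega> $ i) \<in> borel_measurable M"
    using assms i unfolding rv_vec_def by (auto intro!: borel_measurable_diff)
  moreover have "\<And>\<omega>. \<omega> \<in> space M \<Longrightarrow> (X \<omega> - Y \<omega>) $ i = X \<omega> $ i - Y \<omega> $ i"
    using assms i unfolding rv_vec_def by auto
  ultimately show "(\<lambda>\<omega>. (X \<omega> - Y \<omega>) $ i) \<in> borel_measurable M" by (rule meas_eqI)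
qed (use assms in \<open>auto simp: rv_vec_def\<close>)

lemma rv_vec_const:
  assumes "dim_vec c = n" shows "rv_vec M n (\<lambda>\<omega>. c)"
  using assms unfolding rv_vec_def by auto

lemma rv_vec_smult:
  assumes "rv_vec M n X"
  shows "rv_vec M n (\<lambda>\<omega>. a \<cdot>\<^sub>v X \<omega>)"
  unfolding rv_vec_def
proof safe
  fix i assume i: "i < n"
  have "(\<lambda>\<omega>. a * X \<omega> $ i) \<in> borel_measurable M"
    using assms i unfolding rv_vec_def by (auto intro!: borel_measurable_times)
  moreover have "\<And>\<omega>. \<omega> \<in> space M \<Longrightarrow> (a \<cdot>\<^sub>v X \<omega>) $ i = a * X \<omega> $ i"
    using assms i unfolding rv_vec_def by auto
  ultimately show "(\<lambda>\<omega>. (a \<cdot>\<^sub>v X \<omega>) $ i) \<in> borel_measurable M" by (rule meas_eqI)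
qed (use assms in \<open>auto simp: rv_vec_def\<close>)

lemma rv_mat_minus:
  assumes "rv_mat M n X" "rv_mat M n Y"
  shows "rv_mat M n (\<lambda>\<omega>. X \<omega> - Y \<omega>)"
  unfolding rv_mat_def
proof safe
  fix i j assume i: "i < n" and j: "j < n"
  have "(\<lambda>\<omega>. X \<omega> $$ (i,j) - Y \<omega> $$ (i,j)) \<in> borel_measurable M"
    using assms i j unfolding rv_mat_def by (auto intro!: borel_measurable_diff)
  moreover have "\<And>\<omega>. \<omega> \<in> space M \<Longrightarrow> (X \<omega> - Y \<omega>) $$ (i,j) = X \<omega> $$ (i,j) - Y \<omega> $$ (i,j)"
    using assms i j unfolding rv_mat_def by auto
  ultimately show "(\<lambda>\<omega>. (X \<omega> - Y \<omega>) $$ (i,j)) \<in> borel_measurable M" by (rule meas_eqI)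
qed (insert assms, unfold rv_mat_def, blast intro: minus_carrier_mat)

lemma rv_mat_const:
  assumes "c \<in> carrier_mat n n" shows "rv_mat M n (\<lambda>\<omega>. c)"
  using assms unfolding rv_mat_def by auto

lemma rv_mat_smult:
  assumes "rv_mat M n X"
  shows "rv_mat M n (\<lambda>\<omega>. a \<cdot>\<^sub>m X \<omega>)"
  unfolding rv_mat_def
proof safe
  fix i j assume i: "i < n" and j: "j < n"
  have "(\<lambda>\<omega>. a * X \<omega> $$ (i,j)) \<in> borel_measurable M"
    using assms i j unfolding rv_mat_def by (auto intro!: borel_measurable_times)
  moreover have "\<And>\<omega>. \<omega> \<in> space M \<Longrightarrow> (a \<cdot>\<^sub>m X \<omega>) $$ (i,j) = a * X \<omega> $$ (i,j)"
    using assms i j unfolding rv_mat_def by auto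
  ultimately show "(\<lambda>\<omega>. (a \<cdot>\<^sub>m X \<omega>) $$ (i,j)) \<in> borel_measurable M" by (rule meas_eqI)
qed (use assms in \<open>auto simp: rv_mat_def\<close>)

lemma rv_mat_vec:
  assumes A: "rv_mat M n A" and X: "rv_vec M n X"
  shows "rv_vec M n (\<lambda>\<omega>. A \<omega> *\<^sub>v X \<omega>)"
  unfolding rv_vec_def
proof safe
  fix i assume i: "i < n"
  have "(\<lambda>\<omega>. \<Sum>j<n. A \<omega> $$ (i,j) * X \<omega> $ j) \<in> borel_measurable M"
    using assms i unfolding rv_vec_def rv_mat_def by (intro borel_measurable_sum borel_measurable_times) auto
  moreover have "\<And>\<omega>. \<omega> \<in> space M \<Longrightarrow> (A \<omega> *\<^sub>v X \<omega>) $ i = (\<Sum>j<n. A \<omega> $$ (i,j) * X \<omega> $ j)"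
    using assms i unfolding rv_vec_def rv_mat_def
    by (auto simp: scalar_prod_def atLeast0LessThan intro!: sum.cong)
  ultimately show "(\<lambda>\<omega>. (A \<omega> *\<^sub>v X \<omega>) $ i) \<in> borel_measurable M" by (rule meas_eqI)
next
  fix \<omega> assume "\<omega> \<in> space M"
  then show "dim_vec (A \<omega> *\<^sub>v X \<omega>) = n" using A unfolding rv_mat_def by auto
qed

lemma det_measurable:
  fixes A :: "'a \<Rightarrow> real mat"
  assumes C: "\<forall>\<omega>\<in>space M. A \<omega> \<in> carrier_mat m m"
    and E: "\<forall>i<m. \<forall>j<m. (\<lambda>\<omega>. A \<omega> $$ (i,j)) \<in> borel_measurable M"
  shows "(\<lambda>\<omega>. det (A \<omega>)) \<in> borel_measurable M"
proof -
  have "(\<lambda>\<omega>. \<Sum>p \<in> {p. p permutes {0..<m}}. signof p * (\<Prod>i = 0..<m. A \<omega> $$ (i, p i))) \<in> borel_measurable M"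
  proof (rule borel_measurable_sum)
    fix p assume p: "p \<in> {p. p permutes {0..<m}}"
    have "(\<lambda>\<omega>. \<Prod>i = 0..<m. A \<omega> $$ (i, p i)) \<in> borel_measurable M"
    proof (rule borel_measurable_prod)
      fix i assume i: "i \<in> {0..<m}"
      then have "p i < m" "i < m" using p permutes_in_image[of p "{0..<m}" i] by auto
      then show "(\<lambda>\<omega>. A \<omega> $$ (i, p i)) \<in> borel_measurable M" using E by blast
    qed
    then show "(\<lambda>\<omega>. signof p * (\<Prod>i = 0..<m. A \<omega> $$ (i, p i))) \<in> borel_measurable M"
      by (rule borel_measurable_times[OF borel_measurable_const])
  qed
  then show ?thesis
  proof (rule meas_eqI)
    fix \<omega> assume "\<omega> \<in> space M"
    then show "det (A \<omega>) = (\<Sum>p \<in> {p. p permutes {0..<m}}. signof p * (\<Prod>i = 0..<m. A \<omega> $$ (i, p i)))"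
      using C det_def' by blast
  qed
qed

lemma rv_mat_det:
  assumes "rv_mat M n A" shows "(\<lambda>\<omega>. det (A \<omega>)) \<in> borel_measurable M"
  using assms det_measurable[of M A n] unfolding rv_mat_def by auto

lemma rv_mat_minv:
  assumes A: "rv_mat M n A"
  shows "rv_mat M n (\<lambda>\<omega>. minv (A \<omega>))"
  unfolding rv_mat_def
proof safe
  fix \<omega> assume "\<omega> \<in> space M"
  then show "minv (A \<omega>) \<in> carrier_mat n n" using A minv_carrier unfolding rv_mat_def by auto
next
  fix i j assume i: "i < n" and j: "j < n"
  have C: "\<forall>\<omega>\<in>space M. A \<omega> \<in> carrier_mat n n" using A unfolding rv_mat_def by auto
  have dm: "(\<lambda>\<omega>. det (A \<omega>)) \<in> borel_measurable M" by (rule rv_mat_det[OF A])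
  have dm2: "(\<lambda>\<omega>. det (mat_delete (A \<omega>) j i)) \<in> borel_measurable M"
  proof (rule det_measurable[where m="n - 1"])
    show "\<forall>\<omega>\<in>space M. mat_delete (A \<omega>) j i \<in> carrier_mat (n - 1) (n - 1)"
      using C mat_delete_carrier by blast
    show "\<forall>i'<n - 1. \<forall>j'<n - 1. (\<lambda>\<omega>. mat_delete (A \<omega>) j i $$ (i', j')) \<in> borel_measurable M"
    proof (intro allI impI)
      fix i' j' assume i': "i' < n - 1" and j': "j' < n - 1"
      let ?a = "if i' < j then i' else Suc i'" and ?b = "if j' < i then j' else Suc j'"
      have ab: "?a < n" "?b < n" using i' j' by auto
      have "(\<lambda>\<omega>. A \<omega> $$ (?a, ?b)) \<in> borel_measurable M" using A ab unfolding rv_mat_def by blast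
      moreover have "\<And>\<omega>. \<omega> \<in> space M \<Longrightarrow> mat_delete (A \<omega>) j i $$ (i', j') = A \<omega> $$ (?a, ?b)"
        using C i' j' unfolding mat_delete_def by auto
      ultimately show "(\<lambda>\<omega>. mat_delete (A \<omega>) j i $$ (i', j')) \<in> borel_measurable M" by (rule meas_eqI)
    qed
  qed
  have "(\<lambda>\<omega>. inverse (det (A \<omega>)) * ((-1)^(j+i) * det (mat_delete (A \<omega>) j i))) \<in> borel_measurable M"
    using dm dm2 by measurable
  moreover have "minv (A \<omega>) $$ (i,j) = inverse (det (A \<omega>)) * ((-1)^(j+i) * det (mat_delete (A \<omega>) j i))"
    if w: "\<omega> \<in> space M" for \<omega>
  proof (cases "det (A \<omega>) = 0")
    case True
    then show ?thesis using minv_cases(2)[of "A \<omega>" n] C w i j by auto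
  next
    case False
    then show ?thesis using minv_adj[of "A \<omega>" n] C w i j
      by (auto simp: adj_mat_def cofactor_def field_simps)
  qed
  ultimately show "(\<lambda>\<omega>. minv (A \<omega>) $$ (i, j)) \<in> borel_measurable M" by (rule meas_eqI)
qed

lemma rv_vec_vnorm:
  assumes "rv_vec M n X" shows "(\<lambda>\<omega>. vnorm (X \<omega>)) \<in> borel_measurable M"
proof -
  have "(\<lambda>\<omega>. sqrt (\<Sum>i<n. (X \<omega> $ i)^2)) \<in> borel_measurable M"
    by (rule measurable_compose[OF _ borel_measurable_sqrt], intro borel_measurable_sum borel_measurable_power)
       (use assms in \<open>auto simp: rv_vec_def\<close>)
  moreover have "\<And>\<omega>. \<omega> \<in> space M \<Longrightarrow> vnorm (X \<omega>) = sqrt (\<Sum>i<n. (X \<omega> $ i)^2)"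
    using assms unfolding rv_vec_def vnorm_def by auto
  ultimately show ?thesis by (rule meas_eqI)
qed

lemma rv_mat_mnorm:
  assumes "rv_mat M n X" shows "(\<lambda>\<omega>. mnorm (X \<omega>)) \<in> borel_measurable M"
proof -
  have "(\<lambda>\<omega>. sqrt (\<Sum>i<n. \<Sum>j<n. (X \<omega> $$ (i,j))^2)) \<in> borel_measurable M"
    by (rule measurable_compose[OF _ borel_measurable_sqrt], intro borel_measurable_sum borel_measurable_power)
       (use assms in \<open>auto simp: rv_mat_def\<close>)
  moreover have "\<And>\<omega>. \<omega> \<in> space M \<Longrightarrow> mnorm (X \<omega>) = sqrt (\<Sum>i<n. \<Sum>j<n. (X \<omega> $$ (i,j))^2)"
    using assms unfolding rv_mat_def mnorm_def by auto
  ultimately show ?thesis by (rule meas_eqI)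
qed

lemma vec_tendsto_vnorm:
  fixes u :: "nat \<Rightarrow> nat \<Rightarrow> real"
  assumes "\<And>i. i < n \<Longrightarrow> (\<lambda>k. u k i) \<longlonglongrightarrow> a i"
  shows "(\<lambda>k. vnorm (Matrix.vec n (u k) - Matrix.vec n a)) \<longlonglongrightarrow> 0"
proof -
  have "(\<lambda>k. sqrt (\<Sum>i<n. (u k i - a i)^2)) \<longlonglongrightarrow> sqrt (\<Sum>i<n. (a i - a i)^2)"
    by (intro tendsto_real_sqrt tendsto_sum tendsto_power tendsto_diff assms tendsto_const) auto
  moreover have "\<And>k. vnorm (Matrix.vec n (u k) - Matrix.vec n a) = sqrt (\<Sum>i<n. (u k i - a i)^2)"
    unfolding vnorm_def by auto
  ultimately show ?thesis by simp
qed

lemma bcv_cont_seq: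
  assumes f: "bounded_cont_vec n f" and v: "dim_vec v = n"
    and w: "\<And>k. dim_vec (w k) = n" and lim: "(\<lambda>k. vnorm (w k - v)) \<longlonglongrightarrow> 0"
  shows "(\<lambda>k. f (w k)) \<longlonglongrightarrow> f v"
proof (rule LIMSEQ_I)
  fix r :: real assume r: "0 < r"
  obtain \<delta> where \<delta>: "\<delta> > 0" "\<And>w'. dim_vec w' = n \<Longrightarrow> vnorm (w' - v) < \<delta> \<Longrightarrow> \<bar>f w' - f v\<bar> < r"
    using f v r unfolding bounded_cont_vec_def by metis
  obtain k0 where k0: "\<And>k. k \<ge> k0 \<Longrightarrow> norm (vnorm (w k - v) - 0) < \<delta>"
    using LIMSEQ_D[OF lim \<delta>(1)] by blast
  have "norm (f (w k) - f v) < r" if "k \<ge> k0" for k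
  proof -
    have "vnorm (w k - v) < \<delta>" using k0[OF that] by (simp add: abs_less_iff)
    then show ?thesis using \<delta>(2)[OF w[of k]] by simp
  qed
  then have "\<forall>k\<ge>k0. norm (f (w k) - f v) < r" by blast
  then show "\<exists>no. \<forall>k\<ge>no. norm (f (w k) - f v) < r" by blast
qed

lemma bcv_measurable:
  assumes f: "bounded_cont_vec n f" and X: "rv_vec M n X"
  shows "(\<lambda>\<omega>. f (X \<omega>)) \<in> borel_measurable M"
proof -
  define e where "e \<omega> = (\<lambda>i. if i < n then X \<omega> $ i else 0)" for \<omega>
  have em: "e \<in> borel_measurable M"
  proof (rule measurable_coordinatewise_then_product)
    fix i
    show "(\<lambda>\<omega>. e \<omega> i) \<in> borel_measurable M"
      using X unfolding e_def rv_vec_def by (cases "i < n") auto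
  qed
  have gc: "continuous_on UNIV (\<lambda>x::nat \<Rightarrow> real. f (Matrix.vec n x))"
  proof (rule continuous_on_sequentiallyI)
    fix u :: "nat \<Rightarrow> nat \<Rightarrow> real" and a
    assume "u \<longlonglongrightarrow> a"
    then have ci: "(\<lambda>k. u k i) \<longlonglongrightarrow> a i" for i
      by (rule continuous_on_tendsto_compose[OF continuous_on_product_coordinates[of i]]) auto
    show "(\<lambda>k. f (Matrix.vec n (u k))) \<longlonglongrightarrow> f (Matrix.vec n a)"
      by (rule bcv_cont_seq[OF f]) (auto intro: vec_tendsto_vnorm ci)
  qed
  have m: "(\<lambda>\<omega>. f (Matrix.vec n (e \<omega>))) \<in> borel_measurable M"
    by (rule borel_measurable_continuous_on[OF gc em])
  have eq1: "Matrix.vec n (e \<omega>) = X \<omega>" if w: "\<omega> \<in> space M" for \<omega>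
  proof (rule eq_vecI)
    show "dim_vec (Matrix.vec n (e \<omega>)) = dim_vec (X \<omega>)" using X w unfolding rv_vec_def by simp
    fix i assume "i < dim_vec (X \<omega>)"
    then show "Matrix.vec n (e \<omega>) $ i = X \<omega> $ i" using X w unfolding rv_vec_def e_def by simp
  qed
  have eq: "f (X \<omega>) = f (Matrix.vec n (e \<omega>))" if "\<omega> \<in> space M" for \<omega>
    using eq1[OF that] by simp
  show ?thesis by (rule meas_eqI[OF m eq])
qed



lemma divmod_aux:
  fixes a q r :: nat
  assumes "r < q"
  shows "(a*q + r) div q = a" "(a*q + r) mod q = r"
  using assms by auto

lemma sum_shift_block:
  fixes g :: "nat \<Rightarrow> real"
  shows "(\<Sum>i\<in>{a*k..<a*k+k}. g i) = (\<Sum>r<k. g (a*k + r))"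
proof -
  have "(\<Sum>i\<in>{0 + a*k..<k + a*k}. g i) = (\<Sum>i\<in>{0..<k}. g (i + a*k))"
    by (rule sum.shift_bounds_nat_ivl)
  then show ?thesis by (simp add: add.commute atLeast0LessThan)
qed

lemma sum_split_mult:
  fixes g :: "nat \<Rightarrow> real"
  shows "(\<Sum>m<n*k. g m) = (\<Sum>a<n. \<Sum>r<k. g (a*k + r))"
proof -
  have "(\<Sum>m<n*k. g m) = (\<Sum>a<n. \<Sum>i\<in>{a*k..<a*k+k}. g i)"
    by (rule sum.nat_group[symmetric])
  also have "\<dots> = (\<Sum>a<n. \<Sum>r<k. g (a*k + r))"
    by (simp only: sum_shift_block)
  finally show ?thesis .
qed

lemma vecA_dim[simp]: "dim_vec (vecA p d A) = p*d*d"
  unfolding vecA_def by simp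

lemma vecA_vec_inv:
  assumes v: "dim_vec v = p*d*d"
  shows "vecA p d (vec_inv p d v) = v"
proof (rule eq_vecI)
  show "dim_vec (vecA p d (vec_inv p d v)) = dim_vec v" using v by simp
  fix m assume "m < dim_vec v"
  then have m: "m < p*(d*d)" using v by (simp add: mult.assoc)
  then have d0: "d > 0" by (cases d) auto
  define a where "a = m div (d*d)"
  define r where "r = m mod (d*d)"
  have ap: "a < p" unfolding a_def using m by (simp add: less_mult_imp_div_less)
  have r: "r < d*d" unfolding r_def using d0 by simp
  have rd: "r div d < d" using r d0 by (simp add: less_mult_imp_div_less)
  have rm: "r mod d < d" using d0 by simp
  have mr: "m = a*(d*d) + r" unfolding a_def r_def using div_mult_mod_eq[of m "d*d"] by simp
  have "vecA p d (vec_inv p d v) $ m = vec_inv p d v (a + 1) $$ (r mod d, r div d)"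
    unfolding vecA_def a_def r_def using m by (simp add: mult.assoc Let_def)
  also have "\<dots> = v $ (a*d*d + (r div d)*d + r mod d)"
    unfolding vec_inv_def using ap rd rm by simp
  also have "a*d*d + (r div d)*d + r mod d = m"
    using mr by (simp add: mult.assoc)
  finally show "vecA p d (vec_inv p d v) $ m = v $ m" .
qed

lemma mnorm_sq: "mnorm A ^ 2 = (\<Sum>i<dim_row A. \<Sum>j<dim_col A. (A $$ (i,j))^2)"
  unfolding mnorm_def by (simp add: sum_nonneg)

lemma vnorm_sq: "vnorm v ^ 2 = (\<Sum>i<dim_vec v. (v $ i)^2)"
  unfolding vnorm_def by (simp add: sum_nonneg)

lemma tnorm_vec_inv:
  assumes A: "tuple_dims p d A" and v: "dim_vec v = p*d*d"
  shows "tnorm_dist p (vec_inv p d v) A = vnorm (v - vecA p d A)"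
proof -
  define g where "g m = (v $ m - vecA p d A $ m)^2" for m
  have "vnorm (v - vecA p d A) ^ 2 = (\<Sum>m<p*(d*d). g m)"
    unfolding vnorm_sq g_def using v by (simp add: mult.assoc)
  also have "\<dots> = (\<Sum>a<p. \<Sum>r<d*d. g (a*(d*d) + r))" by (rule sum_split_mult)
  also have "\<dots> = (\<Sum>a<p. \<Sum>j<d. \<Sum>i<d. g (a*(d*d) + (j*d + i)))"
    by (simp only: sum_split_mult)
  also have "\<dots> = (\<Sum>a<p. \<Sum>i<d. \<Sum>j<d. g (a*(d*d) + (j*d + i)))"
    by (rule sum.cong[OF refl], rule sum.swap)
  also have "\<dots> = (\<Sum>a<p. \<Sum>i<d. \<Sum>j<d. (v $ (a*d*d + j*d + i) - A (a+1) $$ (i,j))^2)"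
  proof (rule sum.cong[OF refl], rule sum.cong[OF refl], rule sum.cong[OF refl])
    fix a i j assume a: "a \<in> {..<p}" and i: "i \<in> {..<d}" and j: "j \<in> {..<d}"
    have ji: "j*d + i < d*d"
    proof -
      have "j*d + i < j*d + d" using i by simp
      also have "\<dots> = (j+1)*d" by simp
      also have "\<dots> \<le> d*d" using j by (intro mult_right_mono) auto
      finally show ?thesis .
    qed
    have lt: "a*(d*d) + (j*d + i) < p*d*d"
    proof -
      have "a*(d*d) + (j*d + i) < a*(d*d) + d*d" using ji by simp
      also have "\<dots> = (a+1)*(d*d)" by simp
      also have "\<dots> \<le> p*(d*d)" using a by (intro mult_right_mono) auto
      finally show ?thesis by (simp add: mult.assoc)
    qed
    have d1: "(a*(d*d) + (j*d + i)) div (d*d) = a" "(a*(d*d) + (j*d + i)) mod (d*d) = j*d + i"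
      using divmod_aux[OF ji] by auto
    have d2: "(j*d + i) div d = j" "(j*d + i) mod d = i"
      using divmod_aux[of i d j] i by auto
    show "g (a*(d*d) + (j*d + i)) = (v $ (a*d*d + j*d + i) - A (a+1) $$ (i,j))^2"
      unfolding g_def vecA_def using lt d1 d2 by (simp add: mult.assoc add.assoc)
  qed
  also have "\<dots> = (\<Sum>a<p. mnorm (vec_inv p d v (a+1) - A (a+1)) ^ 2)"
  proof (intro sum.cong refl)
    fix a assume a: "a \<in> {..<p}"
    then have Ad: "A (a+1) \<in> carrier_mat d d" using A unfolding tuple_dims_def by auto
    show "(\<Sum>i<d. \<Sum>j<d. (v $ (a*d*d + j*d + i) - A (a+1) $$ (i,j))^2) = mnorm (vec_inv p d v (a+1) - A (a+1)) ^ 2"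
      unfolding mnorm_sq using Ad a by (simp add: vec_inv_def)
  qed
  also have "\<dots> = (\<Sum>k\<in>{1..p}. mnorm (vec_inv p d v k - A k) ^ 2)"
    using sum.atLeast1_atMost_eq[of "\<lambda>k. mnorm (vec_inv p d v k - A k) ^ 2" p] by simp
  also have "\<dots> = tnorm_dist p (vec_inv p d v) A ^ 2"
    unfolding tnorm_dist_def by (simp add: sum_nonneg)
  finally have sq: "vnorm (v - vecA p d A) ^ 2 = tnorm_dist p (vec_inv p d v) A ^ 2" .
  have vn: "vnorm (v - vecA p d A) \<ge> 0" unfolding vnorm_def by (simp add: sum_nonneg)
  have tn: "tnorm_dist p (vec_inv p d v) A \<ge> 0" unfolding tnorm_dist_def by (simp add: sum_nonneg)
  show ?thesis by (rule power2_eq_imp_eq[OF sq[symmetric] tn vn])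
qed



lemma vnorm_tri3:
  assumes "dim_vec u = n" "dim_vec v = n" "dim_vec w = n"
  shows "vnorm (u - w) \<le> vnorm (u - v) + vnorm (v - w)"
proof -
  have "u - w = (u - v) + (v - w)" using assms by (intro eq_vecI) auto
  then show ?thesis using vnorm_add[of "u - v" "v - w"] assms by simp
qed

lemma vnorm_sym:
  assumes "dim_vec u = dim_vec v" shows "vnorm (u - v) = vnorm (v - u)"
  unfolding vnorm_def using assms by (intro arg_cong[where f=sqrt] sum.cong) (auto simp: power2_commute)

lemma vnorm_rev:
  assumes "dim_vec v = dim_vec w" shows "vnorm w \<le> vnorm v + vnorm (w - v)"
proof -
  have "w = v + (w - v)" using assms by (intro eq_vecI) auto
  then have "vnorm w = vnorm (v + (w - v))" by simp
  also have "\<dots> \<le> vnorm v + vnorm (w - v)" using assms by (intro vnorm_add) simp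
  finally show ?thesis .
qed

lemma comp_le_vnorm:
  assumes "i < dim_vec v" shows "\<bar>v $ i\<bar> \<le> vnorm v"
proof -
  have "(v $ i)^2 \<le> (\<Sum>j<dim_vec v. (v $ j)^2)"
    using assms by (intro member_le_sum) auto
  then have "sqrt ((v $ i)^2) \<le> vnorm v" unfolding vnorm_def by (rule real_sqrt_le_mono)
  then show ?thesis by simp
qed

lemma vnorm_zero_imp:
  assumes "vnorm v = 0" shows "v = 0\<^sub>v (dim_vec v)"
proof (rule eq_vecI)
  fix i assume i: "i < dim_vec (0\<^sub>v (dim_vec v))"
  then have "\<bar>v $ i\<bar> \<le> 0" using comp_le_vnorm[of i v] assms by simp
  then show "v $ i = 0\<^sub>v (dim_vec v) $ i" using i by simp
qed simp

lemma mnorm_tri3: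
  assumes "A \<in> carrier_mat n n" "B \<in> carrier_mat n n" "C \<in> carrier_mat n n"
  shows "mnorm (A - C) \<le> mnorm (A - B) + mnorm (B - C)"
proof -
  have "A - C = (A - B) + (B - C)" using assms by (intro eq_matI) auto
  then show ?thesis using mnorm_add[of "A - B" "B - C"] assms by simp
qed

section \<open>Linear algebra core\<close>

lemma mat_vec_index:
  assumes "A \<in> carrier_mat n m" "dim_vec v = m" "i < n"
  shows "(A *\<^sub>v v) $ i = (\<Sum>j<m. A $$ (i,j) * v $ j)"
  using assms by (auto simp: scalar_prod_def atLeast0LessThan intro!: sum.cong)

lemma inj_bound:
  assumes Hc: "Hinf \<in> carrier_mat n n" and c: "c > 0"
    and Hb: "\<And>z. dim_vec z = n \<Longrightarrow> vnorm z \<le> c * vnorm (Hinf *\<^sub>v z)"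
    and Mc: "Mt \<in> carrier_mat n n" and close: "mnorm (Mt - Hinf) \<le> 1 / (2*c)"
    and z: "dim_vec z = n"
  shows "vnorm z \<le> 2 * c * vnorm (Mt *\<^sub>v z)"
proof -
  have eq: "Hinf *\<^sub>v z = Mt *\<^sub>v z - (Mt - Hinf) *\<^sub>v z"
  proof (rule eq_vecI)
    fix i assume "i < dim_vec (Mt *\<^sub>v z - (Mt - Hinf) *\<^sub>v z)"
    then have i: "i < n" using Hc by simp
    have MH: "Mt - Hinf \<in> carrier_mat n n" using Hc by (rule minus_carrier_mat)
    have "(Mt *\<^sub>v z - (Mt - Hinf) *\<^sub>v z) $ i = (Mt *\<^sub>v z) $ i - ((Mt - Hinf) *\<^sub>v z) $ i"
      using i Hc Mc by simp
    also have "\<dots> = (\<Sum>j<n. Mt $$ (i,j) * z $ j) - (\<Sum>j<n. (Mt - Hinf) $$ (i,j) * z $ j)"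
      using mat_vec_index[OF Mc z i] mat_vec_index[OF MH z i] by simp
    also have "(\<Sum>j<n. (Mt - Hinf) $$ (i,j) * z $ j) = (\<Sum>j<n. Mt $$ (i,j) * z $ j - Hinf $$ (i,j) * z $ j)"
      using i Hc Mc by (intro sum.cong) (auto simp: algebra_simps)
    also have "(\<Sum>j<n. Mt $$ (i,j) * z $ j) - \<dots> = (\<Sum>j<n. Hinf $$ (i,j) * z $ j)"
      by (simp add: sum_subtractf)
    also have "\<dots> = (Hinf *\<^sub>v z) $ i" using mat_vec_index[OF Hc z i] by simp
    finally show "(Hinf *\<^sub>v z) $ i = (Mt *\<^sub>v z - (Mt - Hinf) *\<^sub>v z) $ i" by simp
  qed (use Hc in simp)
  have "vnorm (Hinf *\<^sub>v z) \<le> vnorm (Mt *\<^sub>v z) + vnorm ((Mt - Hinf) *\<^sub>v z)"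
    unfolding eq using Mc Hc z by (intro vnorm_minus) simp
  also have "vnorm ((Mt - Hinf) *\<^sub>v z) \<le> mnorm (Mt - Hinf) * vnorm z"
    using Mc Hc z by (intro vnorm_mult_mat_vec[where n=n and m=n]) auto
  also have "\<dots> \<le> 1 / (2*c) * vnorm z"
    using close by (intro mult_right_mono) (auto simp: vnorm_nonneg)
  finally have "vnorm (Hinf *\<^sub>v z) \<le> vnorm (Mt *\<^sub>v z) + 1 / (2*c) * vnorm z" by simp
  then have "c * vnorm (Hinf *\<^sub>v z) \<le> c * vnorm (Mt *\<^sub>v z) + vnorm z / 2"
    using c by (simp add: field_simps)
  then show ?thesis using Hb[OF z] by simp
qed

lemma det_nonzero_from_bound:
  assumes Mc: "Mt \<in> carrier_mat n n"
    and b: "\<And>z. dim_vec z = n \<Longrightarrow> vnorm z \<le> K * vnorm (Mt *\<^sub>v z)"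
  shows "det Mt \<noteq> 0"
proof
  assume "det Mt = 0"
  then obtain v where v: "v \<in> carrier_vec n" "v \<noteq> 0\<^sub>v n" "Mt *\<^sub>v v = 0\<^sub>v n"
    using det_0_iff_vec_prod_zero[OF Mc] by blast
  have "vnorm (0\<^sub>v n :: real vec) = 0" unfolding vnorm_def by simp
  then have "vnorm v \<le> 0" using b[of v] v by simp
  then have "vnorm v = 0" using vnorm_nonneg[of v] by linarith
  then have "v = 0\<^sub>v n" using vnorm_zero_imp[of v] v by simp
  with v show False by simp
qed

lemma minv_solves:
  assumes A: "A \<in> carrier_mat n n" and d: "det A \<noteq> 0" and h: "dim_vec h = n"
  shows "A *\<^sub>v (minv A *\<^sub>v h) = h"
proof -
  have B: "minv A \<in> carrier_mat n n" "A * minv A = 1\<^sub>m n" using minv_cases(1)[OF A d] by auto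
  have hc: "h \<in> carrier_vec n" using h by (rule carrier_vecI)
  have "A *\<^sub>v (minv A *\<^sub>v h) = (A * minv A) *\<^sub>v h"
    by (rule assoc_mult_mat_vec[symmetric, OF A B(1) hc])
  also have "\<dots> = h" unfolding B(2) using hc by (rule one_mult_mat_vec)
  finally show ?thesis .
qed

lemma key_identity:
  fixes t :: real
  assumes t: "t > 0"
    and H1: "HH1 \<in> carrier_mat n n" and H2: "HH2 \<in> carrier_mat n n"
    and x1: "dim_vec x1 = n" and x2: "dim_vec x2 = n"
    and s1: "HH1 *\<^sub>v x1 = h1" and s2: "HH2 *\<^sub>v x2 = h2"
  shows "((1/t) \<cdot>\<^sub>m HH2) *\<^sub>v (sqrt t \<cdot>\<^sub>v (x2 - x1))
     = (1 / sqrt t) \<cdot>\<^sub>v (h2 - h1) - ((1 / sqrt t) \<cdot>\<^sub>m (HH2 - HH1)) *\<^sub>v x1"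
proof (rule eq_vecI)
  have dh1: "dim_vec h1 = n" and dh2: "dim_vec h2 = n" using s1 s2 H1 H2 by auto
  show "dim_vec (((1/t) \<cdot>\<^sub>m HH2) *\<^sub>v (sqrt t \<cdot>\<^sub>v (x2 - x1))) =
    dim_vec ((1 / sqrt t) \<cdot>\<^sub>v (h2 - h1) - ((1 / sqrt t) \<cdot>\<^sub>m (HH2 - HH1)) *\<^sub>v x1)"
    using H1 H2 dh1 dh2 by simp
  fix i assume "i < dim_vec ((1 / sqrt t) \<cdot>\<^sub>v (h2 - h1) - ((1 / sqrt t) \<cdot>\<^sub>m (HH2 - HH1)) *\<^sub>v x1)"
  then have i: "i < n" using H1 H2 by simp
  define S22 where "S22 = (\<Sum>j<n. HH2 $$ (i,j) * x2 $ j)"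
  define S21 where "S21 = (\<Sum>j<n. HH2 $$ (i,j) * x1 $ j)"
  define S11 where "S11 = (\<Sum>j<n. HH1 $$ (i,j) * x1 $ j)"
  have h2i: "h2 $ i = S22" unfolding S22_def using s2[symmetric] mat_vec_index[OF H2 x2 i] by simp
  have h1i: "h1 $ i = S11" unfolding S11_def using s1[symmetric] mat_vec_index[OF H1 x1 i] by simp
  have c2: "(1/t) \<cdot>\<^sub>m HH2 \<in> carrier_mat n n" using H2 by simp
  have dz: "dim_vec (sqrt t \<cdot>\<^sub>v (x2 - x1)) = n" using x1 by simp
  have "(((1/t) \<cdot>\<^sub>m HH2) *\<^sub>v (sqrt t \<cdot>\<^sub>v (x2 - x1))) $ i
      = (\<Sum>j<n. ((1/t) \<cdot>\<^sub>m HH2) $$ (i,j) * (sqrt t \<cdot>\<^sub>v (x2 - x1)) $ j)"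
    by (rule mat_vec_index[OF c2 dz i])
  also have "\<dots> = (\<Sum>j<n. (1/t * HH2 $$ (i,j)) * (sqrt t * (x2 $ j - x1 $ j)))"
    using H2 x1 x2 i by (intro sum.cong) auto
  also have "\<dots> = (\<Sum>j<n. (sqrt t / t) * (HH2 $$ (i,j) * x2 $ j - HH2 $$ (i,j) * x1 $ j))"
    by (intro sum.cong) (auto simp: algebra_simps)
  also have "\<dots> = (sqrt t / t) * (S22 - S21)"
    unfolding S22_def S21_def by (simp only: sum_distrib_left[symmetric] sum_subtractf)
  finally have L: "(((1/t) \<cdot>\<^sub>m HH2) *\<^sub>v (sqrt t \<cdot>\<^sub>v (x2 - x1))) $ i = (sqrt t / t) * (S22 - S21)" .
  have cD: "(1 / sqrt t) \<cdot>\<^sub>m (HH2 - HH1) \<in> carrier_mat n n" using H1 by (intro smult_carrier_mat minus_carrier_mat)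
  have "((1 / sqrt t) \<cdot>\<^sub>v (h2 - h1) - ((1 / sqrt t) \<cdot>\<^sub>m (HH2 - HH1)) *\<^sub>v x1) $ i
      = (1 / sqrt t) * (h2 $ i - h1 $ i) - (((1 / sqrt t) \<cdot>\<^sub>m (HH2 - HH1)) *\<^sub>v x1) $ i"
    using H1 H2 dh1 dh2 i by simp
  also have "(((1 / sqrt t) \<cdot>\<^sub>m (HH2 - HH1)) *\<^sub>v x1) $ i
      = (\<Sum>j<n. ((1 / sqrt t) \<cdot>\<^sub>m (HH2 - HH1)) $$ (i,j) * x1 $ j)"
    by (rule mat_vec_index[OF cD x1 i])
  also have "\<dots> = (\<Sum>j<n. (1 / sqrt t) * (HH2 $$ (i,j) * x1 $ j - HH1 $$ (i,j) * x1 $ j))"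
    using H1 H2 i by (intro sum.cong) (auto simp: algebra_simps)
  also have "\<dots> = (1 / sqrt t) * (S21 - S11)"
    unfolding S21_def S11_def by (simp only: sum_distrib_left[symmetric] sum_subtractf)
  finally have R: "((1 / sqrt t) \<cdot>\<^sub>v (h2 - h1) - ((1 / sqrt t) \<cdot>\<^sub>m (HH2 - HH1)) *\<^sub>v x1) $ i
      = (1 / sqrt t) * (S22 - S11) - (1 / sqrt t) * (S21 - S11)" unfolding h1i h2i .
  have st: "sqrt t / t = 1 / sqrt t" using t by (simp add: field_simps)
  show "(((1/t) \<cdot>\<^sub>m HH2) *\<^sub>v (sqrt t \<cdot>\<^sub>v (x2 - x1))) $ i =
    ((1 / sqrt t) \<cdot>\<^sub>v (h2 - h1) - ((1 / sqrt t) \<cdot>\<^sub>m (HH2 - HH1)) *\<^sub>v x1) $ i"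
    unfolding L R st using t by (simp add: field_simps)
qed



section \<open>Convergence in probability calculus\<close>

definition small :: "'a measure \<Rightarrow> real filter \<Rightarrow> (real \<Rightarrow> 'a set) \<Rightarrow> bool" where
  "small M F E = ((\<lambda>t. measure M (E t)) \<longlongrightarrow> 0) F"

definition cp :: "'a measure \<Rightarrow> real filter \<Rightarrow> (real \<Rightarrow> 'a \<Rightarrow> real) \<Rightarrow> bool" where
  "cp M F Z = (\<forall>\<epsilon>>0. small M F (\<lambda>t. {\<omega>\<in>space M. Z t \<omega> > \<epsilon>}))"

lemma cp_vec: "conv_prob_vec M F X c = cp M F (\<lambda>t \<omega>. vnorm (X t \<omega> - c))"
  unfolding conv_prob_vec_def cp_def small_def ..

lemma cp_mat: "conv_prob_mat M F X c = cp M F (\<lambda>t \<omega>. mnorm (X t \<omega> - c))"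
  unfolding conv_prob_mat_def cp_def small_def ..

lemma cp_tuple: "conv_prob_tuple p M F X c = cp M F (\<lambda>t \<omega>. tnorm_dist p (X t \<omega>) c)"
  unfolding conv_prob_tuple_def cp_def small_def ..

lemma small_ev: "small M F E \<Longrightarrow> \<eta> > 0 \<Longrightarrow> eventually (\<lambda>t. measure M (E t) < \<eta>) F"
  unfolding small_def by (rule order_tendstoD(2))

lemma smallI:
  assumes "\<And>\<eta>. \<eta> > 0 \<Longrightarrow> eventually (\<lambda>t. measure M (E t) < \<eta>) F"
  shows "small M F E"
  unfolding small_def
proof (rule order_tendstoI)
  fix a :: real assume "a < 0"
  then show "eventually (\<lambda>t. a < measure M (E t)) F"
    by (intro always_eventually allI) (metis measure_nonneg less_le_trans)
next
  fix a :: real assume "0 < a"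
  then show "eventually (\<lambda>t. measure M (E t) < a) F" using assms by blast
qed

lemma small_union:
  assumes P: "prob_space M"
    and ev: "eventually (\<lambda>t. E t \<subseteq> A t \<union> B t \<and> A t \<in> sets M \<and> B t \<in> sets M) F"
    and sA: "small M F A" and sB: "small M F B"
  shows "small M F E"
proof (rule smallI)
  interpret prob_space M by (rule P)
  fix \<eta> :: real assume \<eta>: "\<eta> > 0"
  have "eventually (\<lambda>t. measure M (A t) < \<eta>/2) F" by (rule small_ev[OF sA]) (use \<eta> in simp)
  moreover have "eventually (\<lambda>t. measure M (B t) < \<eta>/2) F" by (rule small_ev[OF sB]) (use \<eta> in simp)
  ultimately show "eventually (\<lambda>t. measure M (E t) < \<eta>) F" using ev
  proof eventually_elim
    case (elim t)
    have "measure M (E t) \<le> measure M (A t \<union> B t)" using elim by (intro finite_measure_mono) auto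
    also have "\<dots> \<le> measure M (A t) + measure M (B t)" using elim by (intro measure_Un_le) auto
    finally show ?case using elim by linarith
  qed
qed

lemma small_empty: "small M F (\<lambda>t. {})"
  unfolding small_def by simp

lemma sets_gt:
  fixes f :: "'a \<Rightarrow> real"
  assumes f: "f \<in> borel_measurable M" shows "{\<omega>\<in>space M. c < f \<omega>} \<in> sets M"
proof -
  have eq: "{\<omega>\<in>space M. c < f \<omega>} = f -` {c<..} \<inter> space M" by auto
  have "f -` {c<..} \<inter> space M \<in> sets M" by (rule measurable_sets[OF f]) (intro borel_open open_greaterThan)
  then show ?thesis using eq by simp
qed

lemma sets_ge:
  fixes f :: "'a \<Rightarrow> real"
  assumes f: "f \<in> borel_measurable M" shows "{\<omega>\<in>space M. c \<le> f \<omega>} \<in> sets M"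
proof -
  have eq: "{\<omega>\<in>space M. c \<le> f \<omega>} = f -` {c..} \<inter> space M" by auto
  have "f -` {c..} \<inter> space M \<in> sets M" by (rule measurable_sets[OF f]) (intro borel_closed closed_atLeast)
  then show ?thesis using eq by simp
qed

lemma cp_add:
  assumes P: "prob_space M" and c1: "cp M F Z1" and c2: "cp M F Z2"
    and ev: "eventually (\<lambda>t. Z1 t \<in> borel_measurable M \<and> Z2 t \<in> borel_measurable M
              \<and> (\<forall>\<omega>\<in>space M. Z t \<omega> \<le> Z1 t \<omega> + Z2 t \<omega>)) F"
  shows "cp M F Z"
  unfolding cp_def
proof (intro allI impI)
  fix \<epsilon> :: real assume \<epsilon>: "\<epsilon> > 0"
  show "small M F (\<lambda>t. {\<omega>\<in>space M. Z t \<omega> > \<epsilon>})"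
  proof (rule small_union[OF P _ c1[unfolded cp_def, rule_format, of "\<epsilon>/2"] c2[unfolded cp_def, rule_format, of "\<epsilon>/2"]])
    show "eventually (\<lambda>t. {\<omega>\<in>space M. Z t \<omega> > \<epsilon>} \<subseteq> {\<omega>\<in>space M. Z1 t \<omega> > \<epsilon>/2} \<union> {\<omega>\<in>space M. Z2 t \<omega> > \<epsilon>/2}
        \<and> {\<omega>\<in>space M. Z1 t \<omega> > \<epsilon>/2} \<in> sets M \<and> {\<omega>\<in>space M. Z2 t \<omega> > \<epsilon>/2} \<in> sets M) F"
      using ev
    proof eventually_elim
      case (elim t)
      then have "{\<omega>\<in>space M. Z t \<omega> > \<epsilon>} \<subseteq> {\<omega>\<in>space M. Z1 t \<omega> > \<epsilon>/2} \<union> {\<omega>\<in>space M. Z2 t \<omega> > \<epsilon>/2}"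
        by force
      moreover have "{\<omega>\<in>space M. Z1 t \<omega> > \<epsilon>/2} \<in> sets M" using elim by (intro sets_gt) auto
      moreover have "{\<omega>\<in>space M. Z2 t \<omega> > \<epsilon>/2} \<in> sets M" using elim by (intro sets_gt) auto
      ultimately show ?case by blast
    qed
  qed (use \<epsilon> in auto)
qed

lemma cp_scale:
  assumes P: "prob_space M" and c1: "cp M F Z1" and K: "K > 0"
    and ev: "eventually (\<lambda>t. Z1 t \<in> borel_measurable M \<and> (\<forall>\<omega>\<in>space M. Z t \<omega> \<le> K * Z1 t \<omega>)) F"
  shows "cp M F Z"
  unfolding cp_def
proof (intro allI impI)
  fix \<epsilon> :: real assume \<epsilon>: "\<epsilon> > 0"
  show "small M F (\<lambda>t. {\<omega>\<in>space M. Z t \<omega> > \<epsilon>})"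
  proof (rule small_union[OF P _ c1[unfolded cp_def, rule_format, of "\<epsilon>/K"] small_empty])
    show "eventually (\<lambda>t. {\<omega>\<in>space M. Z t \<omega> > \<epsilon>} \<subseteq> {\<omega>\<in>space M. Z1 t \<omega> > \<epsilon>/K} \<union> {}
        \<and> {\<omega>\<in>space M. Z1 t \<omega> > \<epsilon>/K} \<in> sets M \<and> {} \<in> sets M) F"
      using ev
    proof eventually_elim
      case (elim t)
      have "{\<omega>\<in>space M. Z t \<omega> > \<epsilon>} \<subseteq> {\<omega>\<in>space M. Z1 t \<omega> > \<epsilon>/K}"
      proof safe
        fix \<omega> assume w: "\<omega> \<in> space M" "\<epsilon> < Z t \<omega>"
        then have "\<epsilon> < K * Z1 t \<omega>" using elim by force
        then show "\<epsilon> / K < Z1 t \<omega>" using K by (simp add: pos_divide_less_eq mult.commute)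
      qed
      moreover have "{\<omega>\<in>space M. Z1 t \<omega> > \<epsilon>/K} \<in> sets M" using elim by (intro sets_gt) auto
      ultimately show ?case by blast
    qed
  qed (use \<epsilon> K in auto)
qed

section \<open>Cut-off functions and tightness\<close>

definition cutR :: "real \<Rightarrow> real vec \<Rightarrow> real" where
  "cutR R v = min 1 (max 0 (vnorm v - R))"

lemma clip_lip: "\<bar>min 1 (max 0 x) - min 1 (max 0 y)\<bar> \<le> \<bar>x - y\<bar>" for x y :: real
  by (auto simp: min_def max_def abs_if)

lemma cutR_range: "0 \<le> cutR R v" "cutR R v \<le> 1"
  unfolding cutR_def by auto

lemma cutR_one: "R + 1 \<le> vnorm v \<Longrightarrow> cutR R v = 1"
  unfolding cutR_def by auto

lemma cutR_mono: "R \<le> R' \<Longrightarrow> cutR R' v \<le> cutR R v"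
  unfolding cutR_def by auto

lemma cutR_bcv: "bounded_cont_vec n (cutR R)"
  unfolding bounded_cont_vec_def
proof (intro conjI allI impI)
  show "\<exists>B. \<forall>v. dim_vec v = n \<longrightarrow> \<bar>cutR R v\<bar> \<le> B"
    using cutR_range by (intro exI[of _ 1]) auto
next
  fix v :: "real vec" and \<epsilon> :: real assume v: "dim_vec v = n" and \<epsilon>: "\<epsilon> > 0"
  show "\<exists>\<delta>>0. \<forall>w. dim_vec w = n \<longrightarrow> vnorm (w - v) < \<delta> \<longrightarrow> \<bar>cutR R w - cutR R v\<bar> < \<epsilon>"
  proof (intro exI[of _ \<epsilon>] conjI allI impI)
    fix w :: "real vec" assume w: "dim_vec w = n" and d: "vnorm (w - v) < \<epsilon>"
    have a: "vnorm w \<le> vnorm v + vnorm (w - v)" using v w by (intro vnorm_rev) simp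
    have b: "vnorm v \<le> vnorm w + vnorm (v - w)" using v w by (intro vnorm_rev) simp
    have c: "vnorm (v - w) = vnorm (w - v)" using v w by (intro vnorm_sym) simp
    have "\<bar>cutR R w - cutR R v\<bar> \<le> \<bar>(vnorm w - R) - (vnorm v - R)\<bar>"
      unfolding cutR_def by (rule clip_lip)
    also have "\<dots> \<le> vnorm (w - v)" using a b c by linarith
    finally show "\<bar>cutR R w - cutR R v\<bar> < \<epsilon>" using d by linarith
  qed (use \<epsilon> in simp)
qed

lemma tight_limit:
  fixes N :: "'b measure"
  assumes meas: "(\<lambda>x. vnorm (g x)) \<in> borel_measurable N" and \<eta>: "\<eta> > 0"
  shows "\<exists>R. (\<integral>x. cutR R (g x) \<partial>N) < \<eta>"
proof (cases "\<exists>R0. integrable N (\<lambda>x. cutR R0 (g x))")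
  case True
  then obtain R0 where int: "integrable N (\<lambda>x. cutR R0 (g x))" by blast
  have mc: "(\<lambda>x. cutR R (g x)) \<in> borel_measurable N" for R
    unfolding cutR_def
    by (intro borel_measurable_min borel_measurable_max borel_measurable_diff borel_measurable_const meas)
  have lim: "(\<lambda>m. \<integral>x. cutR (R0 + real m) (g x) \<partial>N) \<longlonglongrightarrow> (\<integral>x. 0 \<partial>N)"
  proof (rule integral_dominated_convergence[where w="\<lambda>x. cutR R0 (g x)"])
    show "(\<lambda>x. 0::real) \<in> borel_measurable N" by simp
    show "\<And>m. (\<lambda>x. cutR (R0 + real m) (g x)) \<in> borel_measurable N" by (rule mc)
    show "integrable N (\<lambda>x. cutR R0 (g x))" by (rule int)
    show "AE x in N. (\<lambda>m. cutR (R0 + real m) (g x)) \<longlonglongrightarrow> 0"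
    proof (rule AE_I2)
      fix x
      obtain m0 :: nat where m0: "vnorm (g x) - R0 < real m0" using reals_Archimedean2 by blast
      have "eventually (\<lambda>m. cutR (R0 + real m) (g x) = 0) sequentially"
        unfolding eventually_sequentially
      proof (intro exI[of _ m0] allI impI)
        fix m assume "m0 \<le> m"
        then have "real m0 \<le> real m" by simp
        then have "vnorm (g x) - (R0 + real m) < 0" using m0 by linarith
        then show "cutR (R0 + real m) (g x) = 0" unfolding cutR_def by simp
      qed
      then show "(\<lambda>m. cutR (R0 + real m) (g x)) \<longlonglongrightarrow> 0" by (rule tendsto_eventually)
    qed
    show "\<And>m. AE x in N. norm (cutR (R0 + real m) (g x)) \<le> cutR R0 (g x)"
    proof (rule AE_I2)
      fix m x
      have "cutR (R0 + real m) (g x) \<le> cutR R0 (g x)" by (rule cutR_mono) simp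
      then show "norm (cutR (R0 + real m) (g x)) \<le> cutR R0 (g x)" using cutR_range[of "R0 + real m" "g x"] by simp
    qed
  qed
  then have "eventually (\<lambda>m. (\<integral>x. cutR (R0 + real m) (g x) \<partial>N) < \<eta>) sequentially"
    using \<eta> by (intro order_tendstoD(2)) auto
  then obtain m0 where "\<forall>m\<ge>m0. (\<integral>x. cutR (R0 + real m) (g x) \<partial>N) < \<eta>"
    unfolding eventually_sequentially by blast
  then show ?thesis by blast
next
  case False
  then have "(\<integral>x. cutR 0 (g x) \<partial>N) = 0" by (intro not_integrable_integral_eq) blast
  then show ?thesis using \<eta> by (intro exI[of _ 0]) simp
qed

lemma mvn_vnorm_meas: "(\<lambda>x. vnorm (Matrix.vec n x)) \<in> borel_measurable (mvn n S)"
proof -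
  have "(\<lambda>x. sqrt (\<Sum>i<n. (x i)^2)) \<in> borel_measurable (PiM {..<n} (\<lambda>_. lborel))"
    by measurable
  moreover have "\<And>x. vnorm (Matrix.vec n x) = sqrt (\<Sum>i<n. (x i)^2)"
    unfolding vnorm_def by (auto intro!: arg_cong[where f=sqrt] sum.cong)
  ultimately show ?thesis unfolding mvn_def by simp
qed

section \<open>Bolzano-Weierstrass and uniform continuity on balls\<close>

lemma bw_coords:
  fixes u :: "nat \<Rightarrow> nat \<Rightarrow> real"
  assumes b: "\<And>k i. \<bar>u k i\<bar> \<le> B"
  shows "\<exists>r. strict_mono r \<and> (\<forall>i<n. convergent (\<lambda>m. u (r m) i))"
proof (induction n)
  case 0
  show ?case by (intro exI[of _ id]) (auto simp: strict_mono_def)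
next
  case (Suc n)
  then obtain r1 where r1: "strict_mono r1" "\<forall>i<n. convergent (\<lambda>m. u (r1 m) i)" by blast
  have "bounded (range (\<lambda>m. u (r1 m) n))" using b by (intro boundedI[where B=B]) auto
  then obtain l r2 where r2: "strict_mono r2" "((\<lambda>m. u (r1 m) n) \<circ> r2) \<longlonglongrightarrow> l"
    using bounded_imp_convergent_subsequence by blast
  have sm: "strict_mono (r1 \<circ> r2)" using r1(1) r2(1) by (rule strict_mono_o)
  have "\<forall>i<Suc n. convergent (\<lambda>m. u ((r1 \<circ> r2) m) i)"
  proof (intro allI impI)
    fix i assume "i < Suc n"
    then consider "i < n" | "i = n" by linarith
    then show "convergent (\<lambda>m. u ((r1 \<circ> r2) m) i)"
    proof cases
      case 1
      then have "convergent (\<lambda>m. u (r1 m) i)" using r1(2) by blast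
      then have "convergent ((\<lambda>m. u (r1 m) i) \<circ> r2)" using r2(1) by (rule convergent_subseq_convergent)
      then show ?thesis by (simp add: o_def)
    next
      case 2
      then show ?thesis using r2(2) by (auto simp: convergent_def o_def)
    qed
  qed
  with sm show ?case by blast
qed

lemma bw_vec:
  fixes v :: "nat \<Rightarrow> real vec"
  assumes d: "\<And>k. dim_vec (v k) = n" and b: "\<And>k. vnorm (v k) \<le> R"
  shows "\<exists>r a. strict_mono r \<and> dim_vec a = n \<and> (\<lambda>m. vnorm (v (r m) - a)) \<longlonglongrightarrow> 0"
proof -
  define u where "u k i = (if i < n then v k $ i else 0)" for k i
  have ub: "\<bar>u k i\<bar> \<le> \<bar>R\<bar>" for k i
  proof (cases "i < n")
    case True
    then have "\<bar>v k $ i\<bar> \<le> vnorm (v k)" using d by (intro comp_le_vnorm) simp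
    then show ?thesis using b[of k] True unfolding u_def by simp
  qed (simp add: u_def)
  have "\<exists>r. strict_mono r \<and> (\<forall>i<n. convergent (\<lambda>m. u (r m) i))"
    by (rule bw_coords[of u "\<bar>R\<bar>" n, OF ub])
  then obtain r where r: "strict_mono r" "\<forall>i<n. convergent (\<lambda>m. u (r m) i)"
    by (elim exE conjE)
  define a where "a = Matrix.vec n (\<lambda>i. lim (\<lambda>m. u (r m) i))"
  have "(\<lambda>m. vnorm (Matrix.vec n (u (r m)) - Matrix.vec n (\<lambda>i. lim (\<lambda>m. u (r m) i)))) \<longlonglongrightarrow> 0"
    by (rule vec_tendsto_vnorm) (use r(2) in \<open>auto simp: convergent_LIMSEQ_iff\<close>)
  moreover have "Matrix.vec n (u (r m)) = v (r m)" for m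
    using d by (intro eq_vecI) (auto simp: u_def)
  ultimately have "(\<lambda>m. vnorm (v (r m) - a)) \<longlonglongrightarrow> 0" unfolding a_def by simp
  moreover have "dim_vec a = n" unfolding a_def by simp
  ultimately show ?thesis using r(1) by blast
qed

lemma unif_cont:
  assumes f: "bounded_cont_vec n f" and \<epsilon>: "\<epsilon> > 0"
  shows "\<exists>\<delta>>0. \<forall>v w. dim_vec v = n \<longrightarrow> dim_vec w = n \<longrightarrow> vnorm v \<le> R \<longrightarrow> vnorm (w - v) < \<delta> \<longrightarrow> \<bar>f w - f v\<bar> < \<epsilon>"
proof (rule ccontr)
  assume neg: "\<not> ?thesis"
  have "\<forall>k::nat. \<exists>v w. dim_vec v = n \<and> dim_vec w = n \<and> vnorm v \<le> R \<and> vnorm (w - v) < 1/(real k + 1) \<and> \<epsilon> \<le> \<bar>f w - f v\<bar>"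
  proof
    fix k :: nat
    have pos: "1/(real k + 1) > 0" by simp
    show "\<exists>v w. dim_vec v = n \<and> dim_vec w = n \<and> vnorm v \<le> R \<and> vnorm (w - v) < 1/(real k + 1) \<and> \<epsilon> \<le> \<bar>f w - f v\<bar>"
      using neg pos by (meson not_less)
  qed
  then obtain V W where VW: "\<forall>k. dim_vec (V k) = n \<and> dim_vec (W k) = n \<and> vnorm (V k) \<le> R
      \<and> vnorm (W k - V k) < 1/(real k + 1) \<and> \<epsilon> \<le> \<bar>f (W k) - f (V k)\<bar>"
    by metis
  have "\<exists>r a. strict_mono r \<and> dim_vec a = n \<and> (\<lambda>m. vnorm (V (r m) - a)) \<longlonglongrightarrow> 0"
    by (rule bw_vec[where R=R]) (use VW in auto)
  then obtain r a where ra: "strict_mono r" "dim_vec a = n" "(\<lambda>m. vnorm (V (r m) - a)) \<longlonglongrightarrow> 0"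
    by blast
  have fv: "(\<lambda>m. f (V (r m))) \<longlonglongrightarrow> f a"
    by (rule bcv_cont_seq[OF f ra(2)]) (use VW ra in auto)
  have inv: "(\<lambda>m. 1/(real m + 1)) \<longlonglongrightarrow> 0"
    using LIMSEQ_inverse_real_of_nat by (simp add: inverse_eq_divide add.commute)
  have wlim: "(\<lambda>m. vnorm (W (r m) - a)) \<longlonglongrightarrow> 0"
  proof (rule tendsto_sandwich[where f="\<lambda>m. 0" and h="\<lambda>m. 1/(real m + 1) + vnorm (V (r m) - a)"])
    show "eventually (\<lambda>m. 0 \<le> vnorm (W (r m) - a)) sequentially" by (simp add: vnorm_nonneg)
    show "eventually (\<lambda>m. vnorm (W (r m) - a) \<le> 1/(real m + 1) + vnorm (V (r m) - a)) sequentially"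
    proof (intro always_eventually allI)
      fix m
      have "vnorm (W (r m) - a) \<le> vnorm (W (r m) - V (r m)) + vnorm (V (r m) - a)"
        using VW ra by (intro vnorm_tri3[where n=n]) auto
      moreover have "vnorm (W (r m) - V (r m)) < 1/(real (r m) + 1)" using VW by auto
      moreover have "1/(real (r m) + 1) \<le> 1/(real m + 1)"
        using seq_suble[OF ra(1), of m] by (intro divide_left_mono) auto
      ultimately show "vnorm (W (r m) - a) \<le> 1/(real m + 1) + vnorm (V (r m) - a)" by linarith
    qed
    show "(\<lambda>m. 0::real) \<longlonglongrightarrow> 0" by simp
    show "(\<lambda>m. 1/(real m + 1) + vnorm (V (r m) - a)) \<longlonglongrightarrow> 0"
      using tendsto_add[OF inv ra(3)] by simp
  qed
  have fw: "(\<lambda>m. f (W (r m))) \<longlonglongrightarrow> f a"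
    by (rule bcv_cont_seq[OF f ra(2)]) (use VW wlim in auto)
  have "(\<lambda>m. f (W (r m)) - f (V (r m))) \<longlonglongrightarrow> f a - f a" using fw fv by (rule tendsto_diff)
  then have "eventually (\<lambda>m. dist (f (W (r m)) - f (V (r m))) (f a - f a) < \<epsilon>) sequentially"
    using \<epsilon> by (rule tendstoD)
  then obtain m0 where "\<forall>m\<ge>m0. dist (f (W (r m)) - f (V (r m))) (f a - f a) < \<epsilon>"
    unfolding eventually_sequentially by blast
  then have "\<bar>f (W (r m0)) - f (V (r m0))\<bar> < \<epsilon>" by (simp add: dist_real_def)
  with VW show False by (meson not_less)
qed



lemma cp_cong:
  assumes c: "cp M F Z" and ev: "eventually (\<lambda>t. \<forall>\<omega>\<in>space M. Z' t \<omega> = Z t \<omega>) F"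
  shows "cp M F Z'"
  unfolding cp_def small_def
proof (intro allI impI)
  fix \<epsilon> :: real assume \<epsilon>: "\<epsilon> > 0"
  have lim: "((\<lambda>t. measure M {\<omega>\<in>space M. Z t \<omega> > \<epsilon>}) \<longlongrightarrow> 0) F"
    using c \<epsilon> unfolding cp_def small_def by blast
  have eq: "eventually (\<lambda>t. measure M {\<omega>\<in>space M. Z t \<omega> > \<epsilon>} = measure M {\<omega>\<in>space M. Z' t \<omega> > \<epsilon>}) F"
    using ev
  proof eventually_elim
    case (elim t)
    then show ?case by (intro arg_cong[where f="measure M"] Collect_cong) auto
  qed
  show "((\<lambda>t. measure M {\<omega>\<in>space M. Z' t \<omega> > \<epsilon>}) \<longlongrightarrow> 0) F"
    by (rule iffD1[OF tendsto_cong[OF eq] lim])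
qed

lemma small_union5:
  assumes P: "prob_space M"
    and ev: "eventually (\<lambda>t. E t \<subseteq> A1 t \<union> A2 t \<union> A3 t \<union> A4 t \<union> A5 t \<and> A1 t \<in> sets M \<and> A2 t \<in> sets M
       \<and> A3 t \<in> sets M \<and> A4 t \<in> sets M \<and> A5 t \<in> sets M) F"
    and s1: "small M F A1" and s2: "small M F A2" and s3: "small M F A3"
    and s4: "small M F A4" and s5: "small M F A5"
  shows "small M F E"
proof (rule smallI)
  interpret prob_space M by (rule P)
  fix \<eta> :: real assume \<eta>: "\<eta> > 0"
  have "eventually (\<lambda>t. measure M (A1 t) < \<eta>/5) F" by (rule small_ev[OF s1]) (use \<eta> in simp)
  moreover have "eventually (\<lambda>t. measure M (A2 t) < \<eta>/5) F" by (rule small_ev[OF s2]) (use \<eta> in simp)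
  moreover have "eventually (\<lambda>t. measure M (A3 t) < \<eta>/5) F" by (rule small_ev[OF s3]) (use \<eta> in simp)
  moreover have "eventually (\<lambda>t. measure M (A4 t) < \<eta>/5) F" by (rule small_ev[OF s4]) (use \<eta> in simp)
  moreover have "eventually (\<lambda>t. measure M (A5 t) < \<eta>/5) F" by (rule small_ev[OF s5]) (use \<eta> in simp)
  ultimately show "eventually (\<lambda>t. measure M (E t) < \<eta>) F" using ev
  proof eventually_elim
    case (elim t)
    have "measure M (E t) \<le> measure M (A1 t \<union> A2 t \<union> A3 t \<union> A4 t \<union> A5 t)"
      using elim by (intro finite_measure_mono) auto
    also have "\<dots> \<le> measure M (A1 t \<union> A2 t \<union> A3 t \<union> A4 t) + measure M (A5 t)"
      using elim by (intro measure_Un_le) auto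
    also have "measure M (A1 t \<union> A2 t \<union> A3 t \<union> A4 t) \<le> measure M (A1 t \<union> A2 t \<union> A3 t) + measure M (A4 t)"
      using elim by (intro measure_Un_le) auto
    also have "measure M (A1 t \<union> A2 t \<union> A3 t) \<le> measure M (A1 t \<union> A2 t) + measure M (A3 t)"
      using elim by (intro measure_Un_le) auto
    also have "measure M (A1 t \<union> A2 t) \<le> measure M (A1 t) + measure M (A2 t)"
      using elim by (intro measure_Un_le) auto
    finally show ?case using elim by linarith
  qed
qed

lemma slutsky_diff:
  fixes Y1 Y2 :: "real \<Rightarrow> 'a \<Rightarrow> real vec"
  assumes P: "prob_space M"
    and rv: "eventually (\<lambda>t. rv_vec M n (Y1 t) \<and> rv_vec M n (Y2 t)) F"
    and law_cut: "\<And>R. ((\<lambda>t. \<integral>\<omega>. cutR R (Y1 t \<omega>) \<partial>M) \<longlongrightarrow> Lc R) F"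
    and tight: "\<And>\<eta>. \<eta> > 0 \<Longrightarrow> \<exists>R. Lc R < \<eta>"
    and diff: "cp M F (\<lambda>t \<omega>. vnorm (Y2 t \<omega> - Y1 t \<omega>))"
    and f: "bounded_cont_vec n f"
  shows "((\<lambda>t. (\<integral>\<omega>. f (Y2 t \<omega>) \<partial>M) - (\<integral>\<omega>. f (Y1 t \<omega>) \<partial>M)) \<longlongrightarrow> 0) F"
proof -
  interpret prob_space M by (rule P)
  obtain B where B: "\<And>v. dim_vec v = n \<Longrightarrow> \<bar>f v\<bar> \<le> B" using f unfolding bounded_cont_vec_def by blast
  have B0: "B \<ge> 0" using B[of "0\<^sub>v n"] by simp
  show ?thesis
  proof (rule tendstoI)
    fix \<epsilon> :: real assume \<epsilon>: "\<epsilon> > 0"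
    define \<eta> where "\<eta> = \<epsilon> / (4*B + 2)"
    have \<eta>: "\<eta> > 0" using \<epsilon> B0 by (simp add: \<eta>_def)
    have \<eta>\<epsilon>: "\<eta> * (1 + 4*B) < \<epsilon>"
    proof -
      have "\<eta> * (1 + 4*B) < \<eta> * (4*B + 2)" using \<eta> by simp
      also have "\<eta> * (4*B + 2) = \<epsilon>" unfolding \<eta>_def using B0 by simp
      finally show ?thesis .
    qed
    obtain R where R: "Lc R < \<eta>" using tight[OF \<eta>] by blast
    obtain \<delta> where \<delta>: "\<delta> > 0" "\<And>v w. dim_vec v = n \<Longrightarrow> dim_vec w = n \<Longrightarrow> vnorm v \<le> R + 1 \<Longrightarrow> vnorm (w - v) < \<delta> \<Longrightarrow> \<bar>f w - f v\<bar> < \<eta>"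
      using unif_cont[OF f \<eta>, of "R+1"] by blast
    have ev1: "eventually (\<lambda>t. (\<integral>\<omega>. cutR R (Y1 t \<omega>) \<partial>M) < \<eta>) F"
      using law_cut[of R] R by (rule order_tendstoD(2))
    have ev2: "eventually (\<lambda>t. measure M {\<omega>\<in>space M. vnorm (Y2 t \<omega> - Y1 t \<omega>) > \<delta>/2} < \<eta>) F"
    proof -
      have d2: "\<delta>/2 > 0" using \<delta>(1) by simp
      have "small M F (\<lambda>t. {\<omega>\<in>space M. vnorm (Y2 t \<omega> - Y1 t \<omega>) > \<delta>/2})"
        using diff d2 unfolding cp_def by blast
      then show ?thesis using \<eta> by (rule small_ev)
    qed
    show "eventually (\<lambda>t. dist ((\<integral>\<omega>. f (Y2 t \<omega>) \<partial>M) - (\<integral>\<omega>. f (Y1 t \<omega>) \<partial>M)) 0 < \<epsilon>) F"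
      using ev1 ev2 rv
    proof eventually_elim
      case (elim t)
      define A1 where "A1 = {\<omega>\<in>space M. R + 1 \<le> vnorm (Y1 t \<omega>)}"
      define A2 where "A2 = {\<omega>\<in>space M. \<delta>/2 < vnorm (Y2 t \<omega> - Y1 t \<omega>)}"
      have rv1: "rv_vec M n (Y1 t)" and rv2: "rv_vec M n (Y2 t)" using elim by auto
      have dims: "\<And>\<omega>. \<omega> \<in> space M \<Longrightarrow> dim_vec (Y1 t \<omega>) = n \<and> dim_vec (Y2 t \<omega>) = n"
        using rv1 rv2 unfolding rv_vec_def by auto
      have m1: "(\<lambda>\<omega>. vnorm (Y1 t \<omega>)) \<in> borel_measurable M" by (rule rv_vec_vnorm[OF rv1])
      have m12: "(\<lambda>\<omega>. vnorm (Y2 t \<omega> - Y1 t \<omega>)) \<in> borel_measurable M"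
        by (rule rv_vec_vnorm[OF rv_vec_minus[OF rv2 rv1]])
      have A1s: "A1 \<in> sets M" unfolding A1_def by (rule sets_ge[OF m1])
      have A2s: "A2 \<in> sets M" unfolding A2_def by (rule sets_gt[OF m12])
      have fm1: "(\<lambda>\<omega>. f (Y1 t \<omega>)) \<in> borel_measurable M" by (rule bcv_measurable[OF f rv1])
      have fm2: "(\<lambda>\<omega>. f (Y2 t \<omega>)) \<in> borel_measurable M" by (rule bcv_measurable[OF f rv2])
      have cm: "(\<lambda>\<omega>. cutR R (Y1 t \<omega>)) \<in> borel_measurable M" by (rule bcv_measurable[OF cutR_bcv rv1])
      have int1: "integrable M (\<lambda>\<omega>. f (Y1 t \<omega>))"
        by (rule integrable_const_bound[where B=B, OF AE_I2 fm1]) (simp add: B dims)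
      have int2: "integrable M (\<lambda>\<omega>. f (Y2 t \<omega>))"
        by (rule integrable_const_bound[where B=B, OF AE_I2 fm2]) (simp add: B dims)
      have intc: "integrable M (\<lambda>\<omega>. cutR R (Y1 t \<omega>))"
        by (rule integrable_const_bound[where B=1, OF AE_I2 cm]) (simp add: cutR_range abs_le_iff)
      have intA1: "integrable M (\<lambda>\<omega>. indicator A1 \<omega> :: real)"
        by (rule integrable_const_bound[where B=1, OF AE_I2 borel_measurable_indicator[OF A1s]]) (auto simp: indicator_def)
      have intA2: "integrable M (\<lambda>\<omega>. indicator A2 \<omega> :: real)"
        by (rule integrable_const_bound[where B=1, OF AE_I2 borel_measurable_indicator[OF A2s]]) (auto simp: indicator_def)
      have pA1: "measure M A1 < \<eta>"
      proof -
        have "measure M A1 = (\<integral>\<omega>. indicator A1 \<omega> \<partial>M)"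
          using A1s by (simp add: Int_absorb2 sets.sets_into_space)
        also have "\<dots> \<le> (\<integral>\<omega>. cutR R (Y1 t \<omega>) \<partial>M)"
        proof (rule integral_mono[OF intA1 intc])
          fix \<omega> assume "\<omega> \<in> space M"
          show "indicator A1 \<omega> \<le> cutR R (Y1 t \<omega>)"
            by (cases "\<omega> \<in> A1") (auto simp: A1_def cutR_one cutR_range)
        qed
        finally show ?thesis using elim by linarith
      qed
      have pA2: "measure M A2 < \<eta>" using elim unfolding A2_def by simp
      have pt: "\<bar>f (Y2 t \<omega>) - f (Y1 t \<omega>)\<bar> \<le> \<eta> + 2*B * indicator A1 \<omega> + 2*B * indicator A2 \<omega>"
        if w: "\<omega> \<in> space M" for \<omega>
      proof (cases "\<omega> \<in> A1 \<or> \<omega> \<in> A2")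
        case True
        have "\<bar>f (Y2 t \<omega>) - f (Y1 t \<omega>)\<bar> \<le> \<bar>f (Y2 t \<omega>)\<bar> + \<bar>f (Y1 t \<omega>)\<bar>"
          by (rule abs_triangle_ineq4)
        also have "\<dots> \<le> 2*B"
        proof -
          have "\<bar>f (Y2 t \<omega>)\<bar> \<le> B" using B dims[OF w] by blast
          moreover have "\<bar>f (Y1 t \<omega>)\<bar> \<le> B" using B dims[OF w] by blast
          ultimately show ?thesis by linarith
        qed
        also have "\<dots> \<le> \<eta> + 2*B * indicator A1 \<omega> + 2*B * indicator A2 \<omega>"
          using True \<eta> B0 by (auto simp: indicator_def)
        finally show ?thesis .
      next
        case False
        then have a: "vnorm (Y1 t \<omega>) \<le> R + 1" and b: "vnorm (Y2 t \<omega> - Y1 t \<omega>) < \<delta>"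
          using w \<delta>(1) unfolding A1_def A2_def by auto
        have "\<bar>f (Y2 t \<omega>) - f (Y1 t \<omega>)\<bar> < \<eta>" using \<delta>(2)[OF _ _ a b] dims[OF w] by simp
        then show ?thesis using False by (simp add: indicator_def)
      qed
      have "\<bar>(\<integral>\<omega>. f (Y2 t \<omega>) \<partial>M) - (\<integral>\<omega>. f (Y1 t \<omega>) \<partial>M)\<bar> = \<bar>\<integral>\<omega>. f (Y2 t \<omega>) - f (Y1 t \<omega>) \<partial>M\<bar>"
        using int1 int2 by simp
      also have "\<dots> \<le> (\<integral>\<omega>. \<bar>f (Y2 t \<omega>) - f (Y1 t \<omega>)\<bar> \<partial>M)"
        using integral_norm_bound[of M "\<lambda>\<omega>. f (Y2 t \<omega>) - f (Y1 t \<omega>)"] by simp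
      also have "\<dots> \<le> (\<integral>\<omega>. \<eta> + 2*B * indicator A1 \<omega> + 2*B * indicator A2 \<omega> \<partial>M)"
        by (rule integral_mono) (use int1 int2 intA1 intA2 pt in auto)
      also have "\<dots> = \<eta> + 2*B * measure M A1 + 2*B * measure M A2"
      proof -
        have "(\<integral>\<omega>. \<eta> + 2*B * indicator A1 \<omega> + 2*B * indicator A2 \<omega> \<partial>M)
            = (\<integral>\<omega>. \<eta> + 2*B * indicator A1 \<omega> \<partial>M) + (\<integral>\<omega>. 2*B * indicator A2 \<omega> \<partial>M)"
          by (rule Bochner_Integration.integral_add) (use intA1 intA2 in auto)
        also have "(\<integral>\<omega>. \<eta> + 2*B * indicator A1 \<omega> \<partial>M) = (\<integral>\<omega>. \<eta> \<partial>M) + (\<integral>\<omega>. 2*B * indicator A1 \<omega> \<partial>M)"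
          by (rule Bochner_Integration.integral_add) (use intA1 in auto)
        also have "(\<integral>\<omega>. \<eta> \<partial>M) = \<eta>" by (simp add: prob_space)
        also have "(\<integral>\<omega>. 2*B * indicator A1 \<omega> \<partial>M) = 2*B * measure M A1"
          using A1s by (simp add: Int_absorb2 sets.sets_into_space)
        also have "(\<integral>\<omega>. 2*B * indicator A2 \<omega> \<partial>M) = 2*B * measure M A2"
          using A2s by (simp add: Int_absorb2 sets.sets_into_space)
        finally show ?thesis .
      qed
      also have "\<dots> \<le> \<eta> + 2*B*\<eta> + 2*B*\<eta>"
        using pA1 pA2 B0 by (intro add_mono mult_left_mono) auto
      also have "\<dots> = \<eta> * (1 + 4*B)" by (simp add: algebra_simps)
      also have "\<dots> < \<epsilon>" by (rule \<eta>\<epsilon>)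
      finally show ?case by (simp add: dist_real_def)
    qed
  qed
qed



theorem lemma3:
  fixes p d :: nat and M :: "'a measure" and T :: "real set"
    and Astar :: "nat \<Rightarrow> real mat"
    and h1 h2 :: "real \<Rightarrow> 'a \<Rightarrow> real vec" and HH1 HH2 :: "real \<Rightarrow> 'a \<Rightarrow> real mat"
    and Hinf :: "real mat"
  defines "F \<equiv> at_top \<sqinter> principal T"
  assumes "Astar \<in> stable_set p d"
    and "prob_space M"
    and "countable T" and "T \<subseteq> {0<..}" and "\<not> bdd_above T"
    and "\<forall>t\<in>T. rv_vec M (p*d*d) (h1 t) \<and> rv_vec M (p*d*d) (h2 t)
               \<and> rv_mat M (p*d*d) (HH1 t) \<and> rv_mat M (p*d*d) (HH2 t)"
    and "conv_prob_tuple p M F (\<lambda>t \<omega>. estimator p d (HH1 t \<omega>) (h1 t \<omega>)) Astar"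
    and "conv_law_normal M F (p*d*d)
           (\<lambda>t \<omega>. sqrt t \<cdot>\<^sub>v (vecA p d (estimator p d (HH1 t \<omega>) (h1 t \<omega>)) - vecA p d Astar))
           (minv Hinf)"
    and "sym_pos_def (p*d*d) Hinf"
    and "conv_prob_mat M F (\<lambda>t \<omega>. (1/t) \<cdot>\<^sub>m HH1 t \<omega>) Hinf"
    and "conv_prob_vec M F (\<lambda>t \<omega>. (1/sqrt t) \<cdot>\<^sub>v (h2 t \<omega> - h1 t \<omega>)) (0\<^sub>v (p*d*d))"
    and "conv_prob_mat M F (\<lambda>t \<omega>. (1/sqrt t) \<cdot>\<^sub>m (HH2 t \<omega> - HH1 t \<omega>)) (0\<^sub>m (p*d*d) (p*d*d))"
  shows "conv_prob_tuple p M F (\<lambda>t \<omega>. estimator p d (HH2 t \<omega>) (h2 t \<omega>)) Astar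
    \<and> conv_law_normal M F (p*d*d)
           (\<lambda>t \<omega>. sqrt t \<cdot>\<^sub>v (vecA p d (estimator p d (HH2 t \<omega>) (h2 t \<omega>)) - vecA p d Astar))
           (minv Hinf)
    \<and> conv_prob_mat M F (\<lambda>t \<omega>. (1/t) \<cdot>\<^sub>m HH2 t \<omega>) Hinf"
proof -
  let ?n = "p*d*d"
  have P: "prob_space M" by fact
  interpret prob_space M by (rule P)
  have rvs: "\<forall>t\<in>T. rv_vec M (p*d*d) (h1 t) \<and> rv_vec M (p*d*d) (h2 t)
               \<and> rv_mat M (p*d*d) (HH1 t) \<and> rv_mat M (p*d*d) (HH2 t)" by fact
  have hyp_est: "conv_prob_tuple p M F (\<lambda>t \<omega>. estimator p d (HH1 t \<omega>) (h1 t \<omega>)) Astar" by fact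
  have hyp_law: "conv_law_normal M F (p*d*d)
           (\<lambda>t \<omega>. sqrt t \<cdot>\<^sub>v (vecA p d (estimator p d (HH1 t \<omega>) (h1 t \<omega>)) - vecA p d Astar))
           (minv Hinf)" by fact
  have spd: "sym_pos_def (p*d*d) Hinf" by fact
  have hyp_M1: "conv_prob_mat M F (\<lambda>t \<omega>. (1/t) \<cdot>\<^sub>m HH1 t \<omega>) Hinf" by fact
  have hyp_e: "conv_prob_vec M F (\<lambda>t \<omega>. (1/sqrt t) \<cdot>\<^sub>v (h2 t \<omega> - h1 t \<omega>)) (0\<^sub>v (p*d*d))" by fact
  have hyp_D: "conv_prob_mat M F (\<lambda>t \<omega>. (1/sqrt t) \<cdot>\<^sub>m (HH2 t \<omega> - HH1 t \<omega>)) (0\<^sub>m (p*d*d) (p*d*d))" by fact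
  have Ast: "Astar \<in> stable_set p d" by fact
  have Tpos: "T \<subseteq> {0<..}" by fact
  have tup: "tuple_dims p d Astar" using Ast unfolding stable_set_def by auto
  have evT: "eventually (\<lambda>t. t \<in> T \<and> 1 \<le> t) F"
    unfolding F_def eventually_inf_principal
    by (rule eventually_mono[OF eventually_ge_at_top[of 1]]) auto
  have tpos: "t > 0" if "t \<in> T" for t using Tpos that by auto

  have Hc: "Hinf \<in> carrier_mat ?n ?n" using spd unfolding sym_pos_def_def by auto
  have Hdet: "det Hinf \<noteq> 0"
  proof
    assume "det Hinf = 0"
    then obtain v where v: "v \<in> carrier_vec ?n" "v \<noteq> 0\<^sub>v ?n" "Hinf *\<^sub>v v = 0\<^sub>v ?n"
      using det_0_iff_vec_prod_zero[OF Hc] by blast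
    have dv: "dim_vec v = ?n" using v(1) by simp
    have "v \<bullet> (Hinf *\<^sub>v v) > 0" using spd dv v(2) unfolding sym_pos_def_def by blast
    moreover have "v \<bullet> (Hinf *\<^sub>v v) = 0" using v by simp
    ultimately show False by simp
  qed
  define Hi where "Hi = minv Hinf"
  have Hi: "Hi \<in> carrier_mat ?n ?n" "Hi * Hinf = 1\<^sub>m ?n" using minv_cases(1)[OF Hc Hdet] unfolding Hi_def by auto
  define c where "c = mnorm Hi + 1"
  have c: "c > 0" unfolding c_def using mnorm_nonneg[of Hi] by linarith
  have Hb: "vnorm z \<le> c * vnorm (Hinf *\<^sub>v z)" if z: "dim_vec z = ?n" for z
  proof -
    have zc: "z \<in> carrier_vec ?n" using z by (rule carrier_vecI)
    have "z = (Hi * Hinf) *\<^sub>v z" using Hi(2) zc by simp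
    also have "\<dots> = Hi *\<^sub>v (Hinf *\<^sub>v z)" by (rule assoc_mult_mat_vec[OF Hi(1) Hc zc])
    finally have zeq: "z = Hi *\<^sub>v (Hinf *\<^sub>v z)" .
    have "vnorm z = vnorm (Hi *\<^sub>v (Hinf *\<^sub>v z))" using arg_cong[OF zeq, of vnorm] .
    also have "\<dots> \<le> mnorm Hi * vnorm (Hinf *\<^sub>v z)"
      using Hi(1) Hc by (intro vnorm_mult_mat_vec[where n="?n" and m="?n"]) auto
    also have "\<dots> \<le> c * vnorm (Hinf *\<^sub>v z)" unfolding c_def by (intro mult_right_mono) (auto simp: vnorm_nonneg)
    finally show ?thesis .
  qed

  define x1 where "x1 = (\<lambda>t \<omega>. minv (HH1 t \<omega>) *\<^sub>v h1 t \<omega>)"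
  define x2 where "x2 = (\<lambda>t \<omega>. minv (HH2 t \<omega>) *\<^sub>v h2 t \<omega>)"
  define a where "a = vecA p d Astar"
  have da: "dim_vec a = ?n" unfolding a_def by simp
  have rH1: "rv_mat M ?n (HH1 t)" and rH2: "rv_mat M ?n (HH2 t)"
    and rh1: "rv_vec M ?n (h1 t)" and rh2: "rv_vec M ?n (h2 t)" if "t \<in> T" for t
    using rvs that by auto
  have rvx1: "rv_vec M ?n (x1 t)" if "t \<in> T" for t
    unfolding x1_def by (rule rv_mat_vec[OF rv_mat_minv[OF rH1[OF that]] rh1[OF that]])
  have rvx2: "rv_vec M ?n (x2 t)" if "t \<in> T" for t
    unfolding x2_def by (rule rv_mat_vec[OF rv_mat_minv[OF rH2[OF that]] rh2[OF that]])
  have dx1: "dim_vec (x1 t \<omega>) = ?n" if "t \<in> T" "\<omega> \<in> space M" for t \<omega>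
    using rvx1[OF that(1)] that(2) unfolding rv_vec_def by auto
  have dx2: "dim_vec (x2 t \<omega>) = ?n" if "t \<in> T" "\<omega> \<in> space M" for t \<omega>
    using rvx2[OF that(1)] that(2) unfolding rv_vec_def by auto
  have CH1: "HH1 t \<omega> \<in> carrier_mat ?n ?n" and CH2: "HH2 t \<omega> \<in> carrier_mat ?n ?n"
    and dh1: "dim_vec (h1 t \<omega>) = ?n" and dh2: "dim_vec (h2 t \<omega>) = ?n"
    if "t \<in> T" "\<omega> \<in> space M" for t \<omega>
    using rH1[OF that(1)] rH2[OF that(1)] rh1[OF that(1)] rh2[OF that(1)] that(2)
    unfolding rv_vec_def rv_mat_def by auto

  have cp_x1: "cp M F (\<lambda>t \<omega>. vnorm (x1 t \<omega> - a))"
  proof (rule cp_cong[OF hyp_est[unfolded cp_tuple]])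
    show "eventually (\<lambda>t. \<forall>\<omega>\<in>space M. vnorm (x1 t \<omega> - a) = tnorm_dist p (estimator p d (HH1 t \<omega>) (h1 t \<omega>)) Astar) F"
      using evT
    proof eventually_elim
      case (elim t)
      show ?case
      proof
        fix \<omega> assume w: "\<omega> \<in> space M"
        have dd: "dim_vec (minv (HH1 t \<omega>) *\<^sub>v h1 t \<omega>) = ?n" using dx1[of t \<omega>] elim w unfolding x1_def by auto
        show "vnorm (x1 t \<omega> - a) = tnorm_dist p (estimator p d (HH1 t \<omega>) (h1 t \<omega>)) Astar"
          using tnorm_vec_inv[OF tup dd] unfolding estimator_def a_def x1_def by simp
      qed
    qed
  qed

  have cp_M2: "cp M F (\<lambda>t \<omega>. mnorm ((1/t) \<cdot>\<^sub>m HH2 t \<omega> - Hinf))"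
  proof (rule cp_add[OF P hyp_M1[unfolded cp_mat] hyp_D[unfolded cp_mat]], rule eventually_mono[OF evT], goal_cases)
    case (1 t)
    then have tT: "t \<in> T" and t1: "1 \<le> t" by auto
    have t0: "t > 0" using t1 by simp
    have m1: "(\<lambda>\<omega>. mnorm ((1/t) \<cdot>\<^sub>m HH1 t \<omega> - Hinf)) \<in> borel_measurable M"
      by (rule rv_mat_mnorm[OF rv_mat_minus[OF rv_mat_smult[OF rH1[OF tT]] rv_mat_const[OF Hc]]])
    have m2: "(\<lambda>\<omega>. mnorm ((1/sqrt t) \<cdot>\<^sub>m (HH2 t \<omega> - HH1 t \<omega>) - 0\<^sub>m ?n ?n)) \<in> borel_measurable M"
      by (rule rv_mat_mnorm[OF rv_mat_minus[OF rv_mat_smult[OF rv_mat_minus[OF rH2[OF tT] rH1[OF tT]]] rv_mat_const]]) simp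
    have b: "mnorm ((1/t) \<cdot>\<^sub>m HH2 t \<omega> - Hinf) \<le> mnorm ((1/t) \<cdot>\<^sub>m HH1 t \<omega> - Hinf) + mnorm ((1/sqrt t) \<cdot>\<^sub>m (HH2 t \<omega> - HH1 t \<omega>) - 0\<^sub>m ?n ?n)"
      if w: "\<omega> \<in> space M" for \<omega>
    proof -
      have H1: "HH1 t \<omega> \<in> carrier_mat ?n ?n" and H2: "HH2 t \<omega> \<in> carrier_mat ?n ?n"
        using CH1[OF tT w] CH2[OF tT w] by auto
      define D where "D = (1/sqrt t) \<cdot>\<^sub>m (HH2 t \<omega> - HH1 t \<omega>) - 0\<^sub>m ?n ?n"
      have tri: "mnorm ((1/t) \<cdot>\<^sub>m HH2 t \<omega> - Hinf) \<le> mnorm ((1/t) \<cdot>\<^sub>m HH2 t \<omega> - (1/t) \<cdot>\<^sub>m HH1 t \<omega>) + mnorm ((1/t) \<cdot>\<^sub>m HH1 t \<omega> - Hinf)"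
        using H1 H2 Hc by (intro mnorm_tri3[where n="?n"]) auto
      have st: "sqrt t * sqrt t = t" using t0 by simp
      have eq: "(1/t) \<cdot>\<^sub>m HH2 t \<omega> - (1/t) \<cdot>\<^sub>m HH1 t \<omega> = (1/sqrt t) \<cdot>\<^sub>m D"
      proof (rule eq_matI)
        fix i j assume "i < dim_row ((1/sqrt t) \<cdot>\<^sub>m D)" "j < dim_col ((1/sqrt t) \<cdot>\<^sub>m D)"
        then have ij: "i < ?n" "j < ?n" unfolding D_def by auto
        have "((1/t) \<cdot>\<^sub>m HH2 t \<omega> - (1/t) \<cdot>\<^sub>m HH1 t \<omega>) $$ (i,j) = (1/t) * (HH2 t \<omega> $$ (i,j) - HH1 t \<omega> $$ (i,j))"
          using ij H1 H2 by (simp add: right_diff_distrib)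
        also have "\<dots> = (1/sqrt t) * ((1/sqrt t) * (HH2 t \<omega> $$ (i,j) - HH1 t \<omega> $$ (i,j)))"
          using st t0 by (simp add: field_simps)
        also have "\<dots> = ((1/sqrt t) \<cdot>\<^sub>m D) $$ (i,j)" unfolding D_def using ij H1 H2 by simp
        finally show "((1/t) \<cdot>\<^sub>m HH2 t \<omega> - (1/t) \<cdot>\<^sub>m HH1 t \<omega>) $$ (i,j) = ((1/sqrt t) \<cdot>\<^sub>m D) $$ (i,j)" .
      qed (use H1 H2 in \<open>auto simp: D_def\<close>)
      have "mnorm ((1/t) \<cdot>\<^sub>m HH2 t \<omega> - (1/t) \<cdot>\<^sub>m HH1 t \<omega>) = \<bar>1/sqrt t\<bar> * mnorm D"
        unfolding eq by (rule mnorm_smult)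
      also have "\<dots> \<le> mnorm D"
        using t1 mnorm_nonneg[of D] by (intro mult_left_le_one_le) auto
      finally show ?thesis using tri unfolding D_def by linarith
    qed
    show ?case using m1 m2 b by blast
  qed

  define W where "W = (\<lambda>t \<omega>. vnorm (sqrt t \<cdot>\<^sub>v (x2 t \<omega> - x1 t \<omega>)))"
  have cp_W: "cp M F W"
    unfolding cp_def
  proof (intro allI impI)
    fix \<epsilon> :: real assume \<epsilon>: "\<epsilon> > 0"
    define r where "r = 1 / (2*c)"
    define K where "K = vnorm a + 1"
    have r: "r > 0" using c by (simp add: r_def)
    have K: "K > 0" unfolding K_def using vnorm_nonneg[of a] by linarith
    have e1: "\<epsilon>/(4*c) > 0" using \<epsilon> c by simp
    have e2: "\<epsilon>/(4*c*K) > 0" using \<epsilon> c K by simp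
    define G1 where "G1 = (\<lambda>t. {\<omega>\<in>space M. mnorm ((1/t) \<cdot>\<^sub>m HH1 t \<omega> - Hinf) > r})"
    define G2 where "G2 = (\<lambda>t. {\<omega>\<in>space M. mnorm ((1/t) \<cdot>\<^sub>m HH2 t \<omega> - Hinf) > r})"
    define E1 where "E1 = (\<lambda>t. {\<omega>\<in>space M. vnorm (x1 t \<omega> - a) > 1})"
    define E2 where "E2 = (\<lambda>t. {\<omega>\<in>space M. vnorm ((1/sqrt t) \<cdot>\<^sub>v (h2 t \<omega> - h1 t \<omega>) - 0\<^sub>v ?n) > \<epsilon>/(4*c)})"
    define E3 where "E3 = (\<lambda>t. {\<omega>\<in>space M. mnorm ((1/sqrt t) \<cdot>\<^sub>m (HH2 t \<omega> - HH1 t \<omega>) - 0\<^sub>m ?n ?n) > \<epsilon>/(4*c*K)})"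
    have s1: "small M F G1" unfolding G1_def by (rule hyp_M1[unfolded cp_mat cp_def, rule_format, OF r])
    have s2: "small M F G2" unfolding G2_def by (rule cp_M2[unfolded cp_def, rule_format, OF r])
    have s3: "small M F E1" unfolding E1_def by (rule cp_x1[unfolded cp_def, rule_format]) simp
    have s4: "small M F E2" unfolding E2_def by (rule hyp_e[unfolded cp_vec cp_def, rule_format, OF e1])
    have s5: "small M F E3" unfolding E3_def by (rule hyp_D[unfolded cp_mat cp_def, rule_format, OF e2])
    show "small M F (\<lambda>t. {\<omega>\<in>space M. W t \<omega> > \<epsilon>})"
    proof (rule small_union5[OF P _ s1 s2 s3 s4 s5], rule eventually_mono[OF evT], goal_cases)
      case (1 t)
      then have tT: "t \<in> T" and t1: "1 \<le> t" by auto
      have t0: "t > 0" using t1 by simp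
      have z0: "dim_vec (0\<^sub>v ?n :: real vec) = ?n" by simp
      have z0m: "(0\<^sub>m ?n ?n :: real mat) \<in> carrier_mat ?n ?n" by simp
      have "G1 t \<in> sets M" unfolding G1_def
        by (rule sets_gt[OF rv_mat_mnorm[OF rv_mat_minus[OF rv_mat_smult[OF rH1[OF tT]] rv_mat_const[OF Hc]]]])
      moreover have "G2 t \<in> sets M" unfolding G2_def
        by (rule sets_gt[OF rv_mat_mnorm[OF rv_mat_minus[OF rv_mat_smult[OF rH2[OF tT]] rv_mat_const[OF Hc]]]])
      moreover have "E1 t \<in> sets M" unfolding E1_def
        by (rule sets_gt[OF rv_vec_vnorm[OF rv_vec_minus[OF rvx1[OF tT] rv_vec_const[OF da]]]])
      moreover have "E2 t \<in> sets M" unfolding E2_def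
        by (rule sets_gt[OF rv_vec_vnorm[OF rv_vec_minus[OF rv_vec_smult[OF rv_vec_minus[OF rh2[OF tT] rh1[OF tT]]] rv_vec_const[OF z0]]]])
      moreover have "E3 t \<in> sets M" unfolding E3_def
        by (rule sets_gt[OF rv_mat_mnorm[OF rv_mat_minus[OF rv_mat_smult[OF rv_mat_minus[OF rH2[OF tT] rH1[OF tT]]] rv_mat_const[OF z0m]]]])
      ultimately have sets: "G1 t \<in> sets M \<and> G2 t \<in> sets M \<and> E1 t \<in> sets M \<and> E2 t \<in> sets M \<and> E3 t \<in> sets M"
        by blast
      have sub: "{\<omega>\<in>space M. W t \<omega> > \<epsilon>} \<subseteq> G1 t \<union> G2 t \<union> E1 t \<union> E2 t \<union> E3 t"
      proof (rule subsetI, rule ccontr)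
        fix \<omega> assume w0: "\<omega> \<in> {\<omega>\<in>space M. W t \<omega> > \<epsilon>}" and nin: "\<omega> \<notin> G1 t \<union> G2 t \<union> E1 t \<union> E2 t \<union> E3 t"
        have w: "\<omega> \<in> space M" and Wgt: "W t \<omega> > \<epsilon>" using w0 by auto
        have c1: "mnorm ((1/t) \<cdot>\<^sub>m HH1 t \<omega> - Hinf) \<le> 1/(2*c)" using nin w unfolding G1_def r_def by auto
        have c2: "mnorm ((1/t) \<cdot>\<^sub>m HH2 t \<omega> - Hinf) \<le> 1/(2*c)" using nin w unfolding G2_def r_def by auto
        have c3: "vnorm (x1 t \<omega> - a) \<le> 1" using nin w unfolding E1_def by auto
        have c4: "vnorm ((1/sqrt t) \<cdot>\<^sub>v (h2 t \<omega> - h1 t \<omega>) - 0\<^sub>v ?n) \<le> \<epsilon>/(4*c)" using nin w unfolding E2_def by auto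
        have c5: "mnorm ((1/sqrt t) \<cdot>\<^sub>m (HH2 t \<omega> - HH1 t \<omega>) - 0\<^sub>m ?n ?n) \<le> \<epsilon>/(4*c*K)" using nin w unfolding E3_def by auto
        have H1: "HH1 t \<omega> \<in> carrier_mat ?n ?n" and H2: "HH2 t \<omega> \<in> carrier_mat ?n ?n"
          and h1d: "dim_vec (h1 t \<omega>) = ?n" and h2d: "dim_vec (h2 t \<omega>) = ?n"
          using CH1[OF tT w] CH2[OF tT w] dh1[OF tT w] dh2[OF tT w] by auto
        have x1d: "dim_vec (x1 t \<omega>) = ?n" and x2d: "dim_vec (x2 t \<omega>) = ?n" using dx1[OF tT w] dx2[OF tT w] by auto
        have M1c: "(1/t) \<cdot>\<^sub>m HH1 t \<omega> \<in> carrier_mat ?n ?n" using H1 by simp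
        have M2c: "(1/t) \<cdot>\<^sub>m HH2 t \<omega> \<in> carrier_mat ?n ?n" using H2 by simp
        have b1: "vnorm z \<le> 2*c * vnorm (((1/t) \<cdot>\<^sub>m HH1 t \<omega>) *\<^sub>v z)" if "dim_vec z = ?n" for z
          by (rule inj_bound[OF Hc c Hb M1c c1 that])
        have b2: "vnorm z \<le> 2*c * vnorm (((1/t) \<cdot>\<^sub>m HH2 t \<omega>) *\<^sub>v z)" if "dim_vec z = ?n" for z
          by (rule inj_bound[OF Hc c Hb M2c c2 that])
        have "det ((1/t) \<cdot>\<^sub>m HH1 t \<omega>) \<noteq> 0" by (rule det_nonzero_from_bound[OF M1c b1])
        then have d1: "det (HH1 t \<omega>) \<noteq> 0" by simp
        have "det ((1/t) \<cdot>\<^sub>m HH2 t \<omega>) \<noteq> 0" by (rule det_nonzero_from_bound[OF M2c b2])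
        then have d2: "det (HH2 t \<omega>) \<noteq> 0" by simp
        have so1: "HH1 t \<omega> *\<^sub>v x1 t \<omega> = h1 t \<omega>" unfolding x1_def using minv_solves[OF H1 d1 h1d] by simp
        have so2: "HH2 t \<omega> *\<^sub>v x2 t \<omega> = h2 t \<omega>" unfolding x2_def using minv_solves[OF H2 d2 h2d] by simp
        define e where "e = (1/sqrt t) \<cdot>\<^sub>v (h2 t \<omega> - h1 t \<omega>)"
        define D where "D = (1/sqrt t) \<cdot>\<^sub>m (HH2 t \<omega> - HH1 t \<omega>)"
        define z where "z = sqrt t \<cdot>\<^sub>v (x2 t \<omega> - x1 t \<omega>)"
        have key: "((1/t) \<cdot>\<^sub>m HH2 t \<omega>) *\<^sub>v z = e - D *\<^sub>v x1 t \<omega>"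
          unfolding z_def e_def D_def by (rule key_identity[OF t0 H1 H2 x1d x2d so1 so2])
        have zd: "dim_vec z = ?n" unfolding z_def using x1d by simp
        have ed: "dim_vec e = ?n" unfolding e_def using h1d by simp
        have Dc: "D \<in> carrier_mat ?n ?n" unfolding D_def using H1 by (intro smult_carrier_mat minus_carrier_mat)
        have Wz: "W t \<omega> = vnorm z" unfolding W_def z_def by simp
        have A: "vnorm z \<le> 2*c * vnorm (((1/t) \<cdot>\<^sub>m HH2 t \<omega>) *\<^sub>v z)" by (rule b2[OF zd])
        have B1: "vnorm (((1/t) \<cdot>\<^sub>m HH2 t \<omega>) *\<^sub>v z) \<le> vnorm e + vnorm (D *\<^sub>v x1 t \<omega>)"
          unfolding key using ed Dc by (intro vnorm_minus) simp
        have B2: "vnorm (D *\<^sub>v x1 t \<omega>) \<le> mnorm D * vnorm (x1 t \<omega>)"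
          using Dc x1d by (intro vnorm_mult_mat_vec[where n="?n" and m="?n"]) auto
        have Ce: "vnorm e \<le> \<epsilon>/(4*c)"
        proof -
          have "e - 0\<^sub>v ?n = e" using ed by (intro minus_zero_vec carrier_vecI) simp
          then show ?thesis using c4 unfolding e_def by simp
        qed
        have CD: "mnorm D \<le> \<epsilon>/(4*c*K)"
        proof -
          have "D - 0\<^sub>m ?n ?n = D" using Dc by (intro eq_matI) auto
          then show ?thesis using c5 unfolding D_def by simp
        qed
        have Cx: "vnorm (x1 t \<omega>) \<le> K"
          using vnorm_rev[of a "x1 t \<omega>"] da x1d c3 unfolding K_def by simp
        have "mnorm D * vnorm (x1 t \<omega>) \<le> \<epsilon>/(4*c*K) * K"
          by (rule mult_mono) (use CD Cx e2 in \<open>auto simp: vnorm_nonneg\<close>)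
        also have "\<epsilon>/(4*c*K) * K = \<epsilon>/(4*c)" using K by simp
        finally have "vnorm (((1/t) \<cdot>\<^sub>m HH2 t \<omega>) *\<^sub>v z) \<le> \<epsilon>/(4*c) + \<epsilon>/(4*c)"
          using B1 B2 Ce by linarith
        then have "2*c * vnorm (((1/t) \<cdot>\<^sub>m HH2 t \<omega>) *\<^sub>v z) \<le> 2*c * (\<epsilon>/(4*c) + \<epsilon>/(4*c))"
          using c by (intro mult_left_mono) auto
        also have "2*c * (\<epsilon>/(4*c) + \<epsilon>/(4*c)) = \<epsilon>" using c by (simp add: field_simps)
        finally have "W t \<omega> \<le> \<epsilon>" using A Wz by linarith
        then show False using Wgt by linarith
      qed
      show ?case using sub sets by blast
    qed
  qed

  have cp_x2: "cp M F (\<lambda>t \<omega>. vnorm (x2 t \<omega> - a))"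
  proof (rule cp_add[OF P cp_W cp_x1], rule eventually_mono[OF evT], goal_cases)
    case (1 t)
    then have tT: "t \<in> T" and t1: "1 \<le> t" by auto
    have mW: "W t \<in> borel_measurable M" unfolding W_def
      by (rule rv_vec_vnorm[OF rv_vec_smult[OF rv_vec_minus[OF rvx2[OF tT] rvx1[OF tT]]]])
    have m1: "(\<lambda>\<omega>. vnorm (x1 t \<omega> - a)) \<in> borel_measurable M"
      by (rule rv_vec_vnorm[OF rv_vec_minus[OF rvx1[OF tT] rv_vec_const[OF da]]])
    have b: "vnorm (x2 t \<omega> - a) \<le> W t \<omega> + vnorm (x1 t \<omega> - a)" if w: "\<omega> \<in> space M" for \<omega>
    proof -
      have "vnorm (x2 t \<omega> - a) \<le> vnorm (x2 t \<omega> - x1 t \<omega>) + vnorm (x1 t \<omega> - a)"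
        using dx1[OF tT w] dx2[OF tT w] da by (intro vnorm_tri3[where n="?n"]) auto
      moreover have "vnorm (x2 t \<omega> - x1 t \<omega>) \<le> W t \<omega>"
      proof -
        have "W t \<omega> = sqrt t * vnorm (x2 t \<omega> - x1 t \<omega>)" unfolding W_def using t1 by (simp add: vnorm_smult abs_of_nonneg)
        moreover have "1 \<le> sqrt t" using t1 by simp
        moreover have "1 * vnorm (x2 t \<omega> - x1 t \<omega>) \<le> sqrt t * vnorm (x2 t \<omega> - x1 t \<omega>)"
          by (rule mult_right_mono) (use t1 vnorm_nonneg in auto)
        ultimately show ?thesis by simp
      qed
      ultimately show ?thesis by linarith
    qed
    show ?case using mW m1 b by blast
  qed

  have concl1: "conv_prob_tuple p M F (\<lambda>t \<omega>. estimator p d (HH2 t \<omega>) (h2 t \<omega>)) Astar"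
    unfolding cp_tuple
  proof (rule cp_cong[OF cp_x2], rule eventually_mono[OF evT], goal_cases)
    case (1 t)
    then have tT: "t \<in> T" by auto
    show ?case
    proof
      fix \<omega> assume w: "\<omega> \<in> space M"
      have dd: "dim_vec (minv (HH2 t \<omega>) *\<^sub>v h2 t \<omega>) = ?n" using dx2[OF tT w] unfolding x2_def by auto
      show "tnorm_dist p (estimator p d (HH2 t \<omega>) (h2 t \<omega>)) Astar = vnorm (x2 t \<omega> - a)"
        using tnorm_vec_inv[OF tup dd] unfolding estimator_def a_def x2_def by simp
    qed
  qed

  have concl3: "conv_prob_mat M F (\<lambda>t \<omega>. (1/t) \<cdot>\<^sub>m HH2 t \<omega>) Hinf"
    unfolding cp_mat by (rule cp_M2)

  define Y1 where "Y1 = (\<lambda>t \<omega>. sqrt t \<cdot>\<^sub>v (x1 t \<omega> - a))"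
  define Y2 where "Y2 = (\<lambda>t \<omega>. sqrt t \<cdot>\<^sub>v (x2 t \<omega> - a))"
  have Y1eq: "sqrt t \<cdot>\<^sub>v (vecA p d (estimator p d (HH1 t \<omega>) (h1 t \<omega>)) - vecA p d Astar) = Y1 t \<omega>"
    if "t \<in> T" "\<omega> \<in> space M" for t \<omega>
  proof -
    have dd: "dim_vec (minv (HH1 t \<omega>) *\<^sub>v h1 t \<omega>) = ?n" using dx1[OF that] unfolding x1_def by auto
    show ?thesis unfolding Y1_def x1_def a_def estimator_def using vecA_vec_inv[OF dd] by simp
  qed
  have Y2eq: "sqrt t \<cdot>\<^sub>v (vecA p d (estimator p d (HH2 t \<omega>) (h2 t \<omega>)) - vecA p d Astar) = Y2 t \<omega>"
    if "t \<in> T" "\<omega> \<in> space M" for t \<omega>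
  proof -
    have dd: "dim_vec (minv (HH2 t \<omega>) *\<^sub>v h2 t \<omega>) = ?n" using dx2[OF that] unfolding x2_def by auto
    show ?thesis unfolding Y2_def x2_def a_def estimator_def using vecA_vec_inv[OF dd] by simp
  qed
  have rvY: "eventually (\<lambda>t. rv_vec M ?n (Y1 t) \<and> rv_vec M ?n (Y2 t)) F"
    using evT
  proof eventually_elim
    case (elim t)
    then have tT: "t \<in> T" by auto
    have "rv_vec M ?n (Y1 t)" unfolding Y1_def
      by (rule rv_vec_smult[OF rv_vec_minus[OF rvx1[OF tT] rv_vec_const[OF da]]])
    moreover have "rv_vec M ?n (Y2 t)" unfolding Y2_def
      by (rule rv_vec_smult[OF rv_vec_minus[OF rvx2[OF tT] rv_vec_const[OF da]]])
    ultimately show ?case by blast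
  qed
  have diffY: "cp M F (\<lambda>t \<omega>. vnorm (Y2 t \<omega> - Y1 t \<omega>))"
  proof (rule cp_cong[OF cp_W], rule eventually_mono[OF evT], goal_cases)
    case (1 t)
    then have tT: "t \<in> T" by auto
    show ?case
    proof
      fix \<omega> assume w: "\<omega> \<in> space M"
      have "Y2 t \<omega> - Y1 t \<omega> = sqrt t \<cdot>\<^sub>v (x2 t \<omega> - x1 t \<omega>)"
        unfolding Y1_def Y2_def using dx1[OF tT w] dx2[OF tT w] da
        by (intro eq_vecI) (auto simp: algebra_simps)
      then show "vnorm (Y2 t \<omega> - Y1 t \<omega>) = W t \<omega>" unfolding W_def by simp
    qed
  qed
  have lawY1: "((\<lambda>t. \<integral>\<omega>. g (Y1 t \<omega>) \<partial>M) \<longlongrightarrow> (\<integral>x. g (Matrix.vec ?n x) \<partial>mvn ?n (minv Hinf))) F"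
    if g: "bounded_cont_vec ?n g" for g
  proof -
    have orig: "((\<lambda>t. \<integral>\<omega>. g (sqrt t \<cdot>\<^sub>v (vecA p d (estimator p d (HH1 t \<omega>) (h1 t \<omega>)) - vecA p d Astar)) \<partial>M)
        \<longlongrightarrow> (\<integral>x. g (Matrix.vec ?n x) \<partial>mvn ?n (minv Hinf))) F"
      using hyp_law g unfolding conv_law_normal_def by blast
    have eq: "eventually (\<lambda>t. (\<integral>\<omega>. g (sqrt t \<cdot>\<^sub>v (vecA p d (estimator p d (HH1 t \<omega>) (h1 t \<omega>)) - vecA p d Astar)) \<partial>M)
        = (\<integral>\<omega>. g (Y1 t \<omega>) \<partial>M)) F"
      using evT
    proof eventually_elim
      case (elim t)
      then show ?case using Y1eq by (intro Bochner_Integration.integral_cong) auto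
    qed
    show ?thesis by (rule iffD1[OF tendsto_cong[OF eq] orig])
  qed
  have tight: "\<exists>R. (\<integral>x. cutR R (Matrix.vec ?n x) \<partial>mvn ?n (minv Hinf)) < \<eta>" if "\<eta> > 0" for \<eta>
    by (rule tight_limit[OF mvn_vnorm_meas that])
  have concl2: "conv_law_normal M F (p*d*d)
           (\<lambda>t \<omega>. sqrt t \<cdot>\<^sub>v (vecA p d (estimator p d (HH2 t \<omega>) (h2 t \<omega>)) - vecA p d Astar))
           (minv Hinf)"
    unfolding conv_law_normal_def
  proof (intro allI impI)
    fix g assume g: "bounded_cont_vec ?n g"
    have sl: "((\<lambda>t. (\<integral>\<omega>. g (Y2 t \<omega>) \<partial>M) - (\<integral>\<omega>. g (Y1 t \<omega>) \<partial>M)) \<longlongrightarrow> 0) F"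
      by (rule slutsky_diff[OF P rvY lawY1[OF cutR_bcv] tight diffY g])
    have "((\<lambda>t. ((\<integral>\<omega>. g (Y2 t \<omega>) \<partial>M) - (\<integral>\<omega>. g (Y1 t \<omega>) \<partial>M)) + (\<integral>\<omega>. g (Y1 t \<omega>) \<partial>M))
        \<longlongrightarrow> 0 + (\<integral>x. g (Matrix.vec ?n x) \<partial>mvn ?n (minv Hinf))) F"
      by (rule tendsto_add[OF sl lawY1[OF g]])
    then have lim2: "((\<lambda>t. \<integral>\<omega>. g (Y2 t \<omega>) \<partial>M) \<longlongrightarrow> (\<integral>x. g (Matrix.vec ?n x) \<partial>mvn ?n (minv Hinf))) F"
      by simp
    have eq: "eventually (\<lambda>t. (\<integral>\<omega>. g (Y2 t \<omega>) \<partial>M)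
        = (\<integral>\<omega>. g (sqrt t \<cdot>\<^sub>v (vecA p d (estimator p d (HH2 t \<omega>) (h2 t \<omega>)) - vecA p d Astar)) \<partial>M)) F"
      using evT
    proof eventually_elim
      case (elim t)
      then show ?case using Y2eq by (intro Bochner_Integration.integral_cong) auto
    qed
    show "((\<lambda>t. \<integral>\<omega>. g (sqrt t \<cdot>\<^sub>v (vecA p d (estimator p d (HH2 t \<omega>) (h2 t \<omega>)) - vecA p d Astar)) \<partial>M)
        \<longlongrightarrow> (\<integral>x. g (Matrix.vec ?n x) \<partial>mvn ?n (minv Hinf))) F"
      by (rule iffD1[OF tendsto_cong[OF eq] lim2])
  qed
  show ?thesis by (intro conjI concl1 concl2 concl3)
qed


end
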